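(* Let $m\ge2$, $n\ge1$. For every injective group homomorphism $\rho:BS(1,m)\to T_n(\mathbb Z[1/m])$, the group $\rho(BS(1,m))$ has the congruence subgroup property.
   Context: $BS(1,m)=\langle a,t\mid tat^{-1}=a^m\rangle$. $T_n(\mathbb Z[1/m])$ is the group of invertible upper triangular $n\times n$ matrices with entries in $\mathbb Z[1/m]$. For a subgroup $G\le GL_n(\mathbb Z[1/m])$ and an integer $N>0$ coprime to $m$, the congruence subgroup $G(N)$ is $G\cap\ker\big(GL_n(\mathbb Z[1/m])\to GL_n(\mathbb Z/N\mathbb Z)\big)$ (reduction modulo $N$, using $\mathbb Z[1/m]/N\mathbb Z[1/m]\cong\mathbb Z/N\mathbb Z$). $G$ has the congruence subgroup property (CSP) if every finite-index subgroup of $G$ contains $G(N)$ for some $N>0$ coprime to $m$. *)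

theory Defs
  imports "Jordan_Normal_Form.Matrix" "HOL-Algebra.Coset"
begin

definition zinv :: "nat \<Rightarrow> rat set" where
  "zinv m = {q. \<exists>(a::int) (k::nat). q = of_int a / (of_nat m) ^ k}"

definition entries_in :: "rat set \<Rightarrow> nat \<Rightarrow> rat mat \<Rightarrow> bool" where
  "entries_in R n A = (\<forall>i<n. \<forall>j<n. A $$ (i,j) \<in> R)"

definition GLn_zinv :: "nat \<Rightarrow> nat \<Rightarrow> rat mat set" where
  "GLn_zinv m n = {A. A \<in> carrier_mat n n \<and> entries_in (zinv m) n A \<and>
      (\<exists>B. B \<in> carrier_mat n n \<and> entries_in (zinv m) n B \<and>
           A * B = 1\<^sub>m n \<and> B * A = 1\<^sub>m n)}"

definition Tn_zinv :: "nat \<Rightarrow> nat \<Rightarrow> rat mat set" where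
  "Tn_zinv m n = {A \<in> GLn_zinv m n. upper_triangular A}"

definition mat_grp :: "nat \<Rightarrow> rat mat set \<Rightarrow> rat mat monoid" where
  "mat_grp n G = \<lparr>carrier = G, mult = (*), one = 1\<^sub>m n\<rparr>"

text \<open>Congruence subgroup G(N): kernel of reduction mod N, i.e. all entries of g - I
  lie in N Z[1/m].\<close>

definition cong_subgroup :: "nat \<Rightarrow> nat \<Rightarrow> nat \<Rightarrow> rat mat set \<Rightarrow> rat mat set" where
  "cong_subgroup m n N G = {g \<in> G. \<forall>i<n. \<forall>j<n.
      (g $$ (i,j) - (1\<^sub>m n) $$ (i,j)) / of_nat N \<in> zinv m}"

definition has_CSP :: "nat \<Rightarrow> nat \<Rightarrow> rat mat set \<Rightarrow> bool" where
  "has_CSP m n G = (\<forall>H. subgroup H (mat_grp n G) \<and> finite (rcosets\<^bsub>mat_grp n G\<^esub> H) \<longrightarrow>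
      (\<exists>N>0. coprime N m \<and> cong_subgroup m n N G \<subseteq> H))"

section \<open>BS(1,m) by its presentation <a,t | t a t^-1 = a^m>\<close>

text \<open>A letter is (is_t, is_inverse): (False,False)=a, (False,True)=a^-1,
  (True,False)=t, (True,True)=t^-1. Words are lists of letters.\<close>

type_synonym letter = "bool \<times> bool"

inductive bs_eq :: "nat \<Rightarrow> letter list \<Rightarrow> letter list \<Rightarrow> bool" for m where
  refl: "bs_eq m u u"
| sym: "bs_eq m u v \<Longrightarrow> bs_eq m v u"
| trans: "bs_eq m u v \<Longrightarrow> bs_eq m v w \<Longrightarrow> bs_eq m u w"
| cancel: "bs_eq m (u @ [(g,e),(g,\<not>e)] @ v) (u @ v)"
| relator: "bs_eq m (u @ [(True,False),(False,False),(True,True)] @ v)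
                    (u @ replicate m (False,False) @ v)"

text \<open>Evaluation of a word under the homomorphism sending a to A and t to T
  (Ai, Ti are the inverses of A, T).\<close>

definition letter_eval :: "rat mat \<Rightarrow> rat mat \<Rightarrow> rat mat \<Rightarrow> rat mat \<Rightarrow> letter \<Rightarrow> rat mat" where
  "letter_eval A Ai T Ti l = (case l of (False,False) \<Rightarrow> A | (False,True) \<Rightarrow> Ai
      | (True,False) \<Rightarrow> T | (True,True) \<Rightarrow> Ti)"

definition word_eval :: "nat \<Rightarrow> rat mat \<Rightarrow> rat mat \<Rightarrow> rat mat \<Rightarrow> rat mat \<Rightarrow> letter list \<Rightarrow> rat mat" where
  "word_eval n A Ai T Ti w = foldr (\<lambda>l M. letter_eval A Ai T Ti l * M) w (1\<^sub>m n)"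

end

theory Submission
  imports Defs "HOL-Algebra.Generated_Groups"
begin


lemma grp_fin_index_pow:
  fixes G (structure)
  assumes G: "group G" and H: "subgroup H G" and fin: "finite (rcosets\<^bsub>G\<^esub> H)"
  shows "\<exists>D>0. \<forall>x\<in>carrier G. x [^]\<^bsub>G\<^esub> (D::nat) \<in> H"
proof -
  interpret group G by fact
  interpret subgroup H G by fact
  define r where "r = card (rcosets H)"
  have key: "\<exists>e. 0 < e \<and> e \<le> r \<and> x [^] e \<in> H" if x: "x \<in> carrier G" for x
  proof -
    define f where "f k = H #> x [^] (k::nat)" for k
    have "f ` {..r} \<subseteq> rcosets H" unfolding f_def using x by (auto intro!: rcosetsI)
    hence "card (f ` {..r}) \<le> r" unfolding r_def using fin by (simp add: card_mono)
    hence "\<not> inj_on f {..r}" using card_image by fastforce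
    then obtain a b where ab: "a \<le> r" "b \<le> r" "a \<noteq> b" "f a = f b" unfolding inj_on_def by auto
    then obtain a b where ab: "a \<le> r" "b \<le> r" "a < b" "f a = f b"
      by (metis linorder_neqE_nat)
    have "x [^] b \<in> H #> x [^] a" using ab(4) rcos_self[of "x [^] b" H] x unfolding f_def
      by (simp add: subgroup_axioms)
    hence "x [^] b \<otimes> inv (x [^] a) \<in> H" using rcos_module_imp[OF G] x by auto
    moreover have "x [^] b = x [^] (b - a) \<otimes> x [^] a" using ab(3) x
      by (simp add: nat_pow_mult)
    ultimately have "x [^] (b - a) \<in> H" using x
      by (metis inv_solve_right nat_pow_closed)
    thus ?thesis using ab by (intro exI[of _ "b - a"]) auto
  qed
  show ?thesis
  proof (intro exI[of _ "fact r"] conjI ballI)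
    show "0 < (fact r::nat)" by simp
    fix x assume x: "x \<in> carrier G"
    obtain e where e: "0 < e" "e \<le> r" "x [^] e \<in> H" using key[OF x] by blast
    have "e dvd fact r" using e by (simp add: dvd_fact)
    then obtain q where q: "fact r = e * q" by (auto elim: dvdE)
    have "x [^] (fact r::nat) = (x [^] e) [^] q" using x q by (simp add: nat_pow_pow)
    also have "\<dots> = (x [^] e) [^] (int q)" by (simp add: int_pow_int)
    also have "\<dots> \<in> H" by (rule subgroup_int_pow_closed[OF H e(3)])
    finally show "x [^] (fact r::nat) \<in> H" .
  qed
qed


lemma sum_single:
  fixes n :: nat
  assumes "i < n" "\<And>p. p < n \<Longrightarrow> p \<noteq> i \<Longrightarrow> f p = (0::'a::comm_monoid_add)"
  shows "(\<Sum>p<n. f p) = f i"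
proof -
  have "(\<Sum>p<n. f p) = f i + (\<Sum>p\<in>{..<n} - {i}. f p)"
    using assms(1) by (intro sum.remove) (auto simp: finite_lessThan)
  also have "(\<Sum>p\<in>{..<n} - {i}. f p) = 0" using assms(2) by (intro sum.neutral) auto
  finally show ?thesis by simp
qed

lemma mult_entry:
  assumes "A \<in> carrier_mat n n" "B \<in> carrier_mat n n" "i < n" "j < n"
  shows "(A * B) $$ (i,j) = (\<Sum>p<n. A $$ (i,p) * B $$ (p,j))"
  using assms by (simp add: scalar_prod_def atLeast0LessThan)

definition hi :: "nat \<Rightarrow> nat \<Rightarrow> rat mat \<Rightarrow> bool" where
  "hi n s Y \<longleftrightarrow> (\<forall>p<n. \<forall>q<n. q < p + s \<longrightarrow> Y $$ (p,q) = 0)"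

lemma hi_mult:
  assumes Y: "Y \<in> carrier_mat n n" and Z: "Z \<in> carrier_mat n n"
    and hY: "hi n a Y" and hZ: "hi n b Z"
  shows "hi n (a+b) (Y*Z)"
  unfolding hi_def
proof (intro allI impI)
  fix p q assume pq: "p < n" "q < n" "q < p + (a+b)"
  have "(Y*Z) $$ (p,q) = (\<Sum>k<n. Y $$ (p,k) * Z $$ (k,q))" by (rule mult_entry[OF Y Z pq(1,2)])
  also have "\<dots> = 0"
  proof (intro sum.neutral ballI)
    fix k assume k: "k \<in> {..<n}"
    show "Y $$ (p,k) * Z $$ (k,q) = 0"
    proof (cases "k < p + a")
      case True thus ?thesis using hY pq k unfolding hi_def by auto
    next
      case False thus ?thesis using hZ pq k unfolding hi_def by auto
    qed
  qed
  finally show "(Y*Z) $$ (p,q) = 0" .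
qed

lemma hi_mult_entry:
  assumes Y: "Y \<in> carrier_mat n n" and Z: "Z \<in> carrier_mat n n"
    and hY: "hi n a Y" and hZ: "hi n b Z" and i: "i + a + b < n"
  shows "(Y*Z) $$ (i, i+a+b) = Y $$ (i,i+a) * Z $$ (i+a, i+a+b)"
proof -
  have "(Y*Z) $$ (i,i+a+b) = (\<Sum>k<n. Y $$ (i,k) * Z $$ (k,i+a+b))"
    by (rule mult_entry[OF Y Z]) (use i in auto)
  also have "\<dots> = Y $$ (i,i+a) * Z $$ (i+a,i+a+b)"
  proof (rule sum_single)
    show "i + a < n" using i by auto
    fix k assume k: "k < n" "k \<noteq> i + a"
    show "Y $$ (i,k) * Z $$ (k,i+a+b) = 0"
    proof (cases "k < i + a")
      case True thus ?thesis using hY i k unfolding hi_def by auto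
    next
      case False thus ?thesis using hZ i k unfolding hi_def by auto
    qed
  qed
  finally show ?thesis .
qed

lemma ut_hi0: "A \<in> carrier_mat n n \<Longrightarrow> upper_triangular A \<longleftrightarrow> hi n 0 A"
  unfolding hi_def upper_triangular_def by auto

lemma ut_mult:
  fixes A B :: "rat mat"
  assumes "A \<in> carrier_mat n n" "B \<in> carrier_mat n n" "upper_triangular A" "upper_triangular B"
  shows "upper_triangular (A * B)"
  using hi_mult[of A n B 0 0] assms ut_hi0[of A n] ut_hi0[of B n] ut_hi0[of "A*B" n]
  by (simp add: mult_carrier_mat)

lemma ut_diag_mult:
  fixes A B :: "rat mat"
  assumes "A \<in> carrier_mat n n" "B \<in> carrier_mat n n" "upper_triangular A" "upper_triangular B" "i < n"
  shows "(A * B) $$ (i,i) = A $$ (i,i) * B $$ (i,i)"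
  using hi_mult_entry[of A n B 0 0 i] assms ut_hi0[of A n] ut_hi0[of B n] by simp

lemma ut_inverse:
  fixes A B :: "rat mat"
  assumes A: "A \<in> carrier_mat n n" and B: "B \<in> carrier_mat n n"
    and ut: "upper_triangular A" and AB: "A * B = 1\<^sub>m n"
  shows "upper_triangular B"
proof -
  have main: "\<forall>j<i. B $$ (i,j) = 0" if "i < n" for i
    using that
  proof (induct "n - i" arbitrary: i rule: less_induct)
    case (less i)
    have IH: "\<And>p j. i < p \<Longrightarrow> p < n \<Longrightarrow> j < p \<Longrightarrow> B $$ (p,j) = 0"
    proof -
      fix p j assume "i < p" "p < n" "j < p"
      moreover have "n - p < n - i" using \<open>i < p\<close> \<open>p < n\<close> by auto
      ultimately show "B $$ (p,j) = 0" using less(1)[of p] by auto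
    qed
    have row: "(A*B) $$ (i,j) = A $$ (i,i) * B $$ (i,j)" if j: "j \<le> i" for j
    proof -
      have "(A*B) $$ (i,j) = (\<Sum>p<n. A $$ (i,p) * B $$ (p,j))"
        by (rule mult_entry[OF A B]) (use less j in auto)
      also have "\<dots> = A $$ (i,i) * B $$ (i,j)"
      proof (rule sum_single)
        show "i < n" by fact
        fix p assume p: "p < n" "p \<noteq> i"
        show "A $$ (i,p) * B $$ (p,j) = 0"
        proof (cases "p < i")
          case True thus ?thesis using ut less(2) A by (auto simp: upper_triangular_def)
        next
          case False thus ?thesis using IH[of p j] p j by auto
        qed
      qed
      finally show ?thesis .
    qed
    have "A $$ (i,i) * B $$ (i,i) = 1" using row[of i] AB less(2) by simp
    hence nz: "A $$ (i,i) \<noteq> 0" by auto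
    show ?case
    proof (intro allI impI)
      fix j assume "j < i"
      hence "A $$ (i,i) * B $$ (i,j) = 0" using row[of j] AB less(2) by simp
      thus "B $$ (i,j) = 0" using nz by simp
    qed
  qed
  show ?thesis using main B by (auto simp: upper_triangular_def)
qed


lemma zinvI: "q = of_int a / of_nat m ^ k \<Longrightarrow> q \<in> zinv m"
  unfolding zinv_def by blast

lemma zinvE: "q \<in> zinv m \<Longrightarrow> (\<And>a k. q = of_int a / of_nat m ^ k \<Longrightarrow> P) \<Longrightarrow> P"
  unfolding zinv_def by blast

lemma zinv_int: "of_int a \<in> zinv m"
  by (rule zinvI[of _ a _ 0]) simp

lemma zinv_nat: "of_nat a \<in> zinv m"
  using zinv_int[of "int a" m] by simp

lemma zinv_0: "0 \<in> zinv m" and zinv_1: "1 \<in> zinv m"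
  using zinv_int[of 0 m] zinv_int[of 1 m] by auto

lemma zinv_add:
  assumes m: "m > 0" and x: "x \<in> zinv m" and y: "y \<in> zinv m" shows "x + y \<in> zinv m"
proof -
  obtain a k where a: "x = of_int a / of_nat m ^ k" using x by (rule zinvE)
  obtain b l where b: "y = of_int b / of_nat m ^ l" using y by (rule zinvE)
  show ?thesis
    by (rule zinvI[of _ "a * int m ^ l + b * int m ^ k" _ "k + l"])
       (use m in \<open>simp add: a b field_simps power_add\<close>)
qed

lemma zinv_mult:
  assumes x: "x \<in> zinv m" and y: "y \<in> zinv m" shows "x * y \<in> zinv m"
proof -
  obtain a k where a: "x = of_int a / of_nat m ^ k" using x by (rule zinvE)
  obtain b l where b: "y = of_int b / of_nat m ^ l" using y by (rule zinvE)
  show ?thesis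
    by (rule zinvI[of _ "a * b" _ "k + l"]) (simp add: a b power_add)
qed

lemma zinv_uminus: "x \<in> zinv m \<Longrightarrow> - x \<in> zinv m"
  using zinv_mult[OF zinv_int[of "-1" m]] by simp

lemma zinv_diff: "m > 0 \<Longrightarrow> x \<in> zinv m \<Longrightarrow> y \<in> zinv m \<Longrightarrow> x - y \<in> zinv m"
  using zinv_add[of m x "-y"] zinv_uminus[of y m] by simp

lemma zinv_sum: "m > 0 \<Longrightarrow> (\<And>p. p \<in> S \<Longrightarrow> f p \<in> zinv m) \<Longrightarrow> sum f S \<in> zinv m"
proof (induct S rule: infinite_finite_induct)
  case (insert x F) thus ?case by (simp add: zinv_add)
qed (auto simp: zinv_0)

lemma zinv_mpow_inv: "1 / of_nat m ^ k \<in> zinv m"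
  by (rule zinvI[of _ 1]) simp

lemma zinv_mpow: "of_nat m ^ k \<in> zinv m"
  using zinv_nat[of "m^k" m] by simp

definition cz :: "nat \<Rightarrow> nat \<Rightarrow> rat \<Rightarrow> bool" where
  "cz m N x \<longleftrightarrow> x / of_nat N \<in> zinv m"

lemma cz_0: "cz m N 0" by (simp add: cz_def zinv_0)

lemma cz_add: "m > 0 \<Longrightarrow> cz m N x \<Longrightarrow> cz m N y \<Longrightarrow> cz m N (x + y)"
  unfolding cz_def using zinv_add[of m "x / of_nat N" "y / of_nat N"] by (simp add: add_divide_distrib)

lemma cz_uminus: "cz m N x \<Longrightarrow> cz m N (- x)"
  unfolding cz_def using zinv_uminus[of "x / of_nat N" m] by simp

lemma cz_diff: "m > 0 \<Longrightarrow> cz m N x \<Longrightarrow> cz m N y \<Longrightarrow> cz m N (x - y)"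
  using cz_add[of m N x "-y"] cz_uminus[of m N y] by simp

lemma cz_mult_l: "y \<in> zinv m \<Longrightarrow> cz m N x \<Longrightarrow> cz m N (y * x)"
  unfolding cz_def using zinv_mult[of y m "x / of_nat N"] by (simp add: times_divide_eq_right)

lemma cz_mult_r: "y \<in> zinv m \<Longrightarrow> cz m N x \<Longrightarrow> cz m N (x * y)"
  using cz_mult_l[of y m N x] by (simp add: mult.commute)

lemma cz_sum: "m > 0 \<Longrightarrow> (\<And>p. p \<in> S \<Longrightarrow> cz m N (f p)) \<Longrightarrow> cz m N (sum f S)"
proof (induct S rule: infinite_finite_induct)
  case (insert x F) thus ?case by (simp add: cz_add)
qed (auto simp: cz_0)

lemma cz_dvd: "N > 0 \<Longrightarrow> cz m N x \<Longrightarrow> N' dvd N \<Longrightarrow> cz m N' x"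
proof -
  assume N0: "N > 0" and c: "cz m N x" and d: "N' dvd N"
  then obtain c' where N: "N = N' * c'" by (auto elim: dvdE)
  have "c' \<noteq> 0" "N' \<noteq> 0" using N0 N by auto
  hence "x / of_nat N' = of_nat c' * (x / of_nat N)"
    by (simp add: N field_simps)
  thus ?thesis using c zinv_mult[OF zinv_nat[of c' m], of "x / of_nat N"] unfolding cz_def by simp
qed


lemma entries_mult:
  assumes m: "m > 0" and X: "X \<in> carrier_mat n n" and Y: "Y \<in> carrier_mat n n"
    and eX: "entries_in (zinv m) n X" and eY: "entries_in (zinv m) n Y"
  shows "entries_in (zinv m) n (X * Y)"
  unfolding entries_in_def
proof (intro allI impI)
  fix i j assume ij: "i < n" "j < n"
  show "(X*Y) $$ (i,j) \<in> zinv m"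
    unfolding mult_entry[OF X Y ij]
    by (rule zinv_sum[OF m]) (use eX eY ij in \<open>auto simp: entries_in_def intro!: zinv_mult\<close>)
qed

definition eqv :: "nat \<Rightarrow> nat \<Rightarrow> nat \<Rightarrow> rat mat \<Rightarrow> rat mat \<Rightarrow> bool" where
  "eqv m n N X Y \<longleftrightarrow> (\<forall>i<n. \<forall>j<n. cz m N (X $$ (i,j) - Y $$ (i,j)))"

lemma eqv_refl: "eqv m n N X X" by (simp add: eqv_def cz_0)

lemma eqv_sym: "eqv m n N X Y \<Longrightarrow> eqv m n N Y X"
  unfolding eqv_def using cz_uminus by (metis minus_diff_eq)

lemma eqv_trans: "m > 0 \<Longrightarrow> eqv m n N X Y \<Longrightarrow> eqv m n N Y Z \<Longrightarrow> eqv m n N X Z"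
  unfolding eqv_def using cz_add by (metis diff_add_cancel add_diff_eq)

lemma eqv_mult_left:
  assumes m: "m > 0" and W: "W \<in> carrier_mat n n" and X: "X \<in> carrier_mat n n" and Y: "Y \<in> carrier_mat n n"
    and eW: "entries_in (zinv m) n W" and e: "eqv m n N X Y"
  shows "eqv m n N (W * X) (W * Y)"
  unfolding eqv_def
proof (intro allI impI)
  fix i j assume ij: "i < n" "j < n"
  have "(W*X) $$ (i,j) - (W*Y) $$ (i,j) = (\<Sum>p<n. W $$ (i,p) * (X $$ (p,j) - Y $$ (p,j)))"
    unfolding mult_entry[OF W X ij] mult_entry[OF W Y ij]
    by (simp add: sum_subtractf[symmetric] right_diff_distrib)
  also have "cz m N \<dots>"
    by (rule cz_sum[OF m]) (use eW e ij in \<open>auto simp: entries_in_def eqv_def intro!: cz_mult_l\<close>)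
  finally show "cz m N ((W*X) $$ (i,j) - (W*Y) $$ (i,j))" .
qed

lemma eqv_mult_right:
  assumes m: "m > 0" and W: "W \<in> carrier_mat n n" and X: "X \<in> carrier_mat n n" and Y: "Y \<in> carrier_mat n n"
    and eW: "entries_in (zinv m) n W" and e: "eqv m n N X Y"
  shows "eqv m n N (X * W) (Y * W)"
  unfolding eqv_def
proof (intro allI impI)
  fix i j assume ij: "i < n" "j < n"
  have "(X*W) $$ (i,j) - (Y*W) $$ (i,j) = (\<Sum>p<n. (X $$ (i,p) - Y $$ (i,p)) * W $$ (p,j))"
    unfolding mult_entry[OF X W ij] mult_entry[OF Y W ij]
    by (simp add: sum_subtractf[symmetric] left_diff_distrib)
  also have "cz m N \<dots>"
    by (rule cz_sum[OF m]) (use eW e ij in \<open>auto simp: entries_in_def eqv_def intro!: cz_mult_r\<close>)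
  finally show "cz m N ((X*W) $$ (i,j) - (Y*W) $$ (i,j))" .
qed


lemma (in group) conj_nat_pow:
  assumes g: "g \<in> carrier G" and x: "x \<in> carrier G"
  shows "(g \<otimes> x \<otimes> inv g) [^] (k::nat) = g \<otimes> x [^] k \<otimes> inv g"
proof (induct k)
  case 0 thus ?case using g by (simp only: nat_pow_0 r_one r_inv)
next
  case (Suc k)
  have "(g \<otimes> x \<otimes> inv g) [^] Suc k = (g \<otimes> x [^] k \<otimes> inv g) \<otimes> (g \<otimes> x \<otimes> inv g)"
    using Suc by (simp only: nat_pow_Suc)
  also have "\<dots> = g \<otimes> x [^] k \<otimes> (inv g \<otimes> g) \<otimes> x \<otimes> inv g"
    using g x by (simp only: m_assoc m_closed inv_closed nat_pow_closed)
  also have "\<dots> = g \<otimes> (x [^] k \<otimes> x) \<otimes> inv g"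
    using g x by (simp only: l_inv r_one m_assoc m_closed inv_closed nat_pow_closed)
  also have "\<dots> = g \<otimes> x [^] Suc k \<otimes> inv g" by (simp only: nat_pow_Suc)
  finally show ?case .
qed

lemma (in group) conj_int_pow:
  assumes g: "g \<in> carrier G" and x: "x \<in> carrier G"
  shows "(g \<otimes> x \<otimes> inv g) [^] (j::int) = g \<otimes> x [^] j \<otimes> inv g"
proof (cases "j < 0")
  case False
  thus ?thesis using conj_nat_pow[OF g x, of "nat j"] by (simp only: int_pow_def2 if_False)
next
  case True
  have "(g \<otimes> x \<otimes> inv g) [^] j = inv ((g \<otimes> x \<otimes> inv g) [^] nat (- j))"
    using True by (simp only: int_pow_def2 if_True)
  also have "\<dots> = inv (g \<otimes> x [^] nat (- j) \<otimes> inv g)" using conj_nat_pow[OF g x] by simp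
  also have "\<dots> = inv (inv g) \<otimes> inv (x [^] nat (- j)) \<otimes> inv g"
    using g x by (simp only: inv_mult_group m_closed inv_closed nat_pow_closed m_assoc)
  also have "\<dots> = g \<otimes> x [^] j \<otimes> inv g" using True g by (simp only: int_pow_def2 if_True inv_inv)
  finally show ?thesis .
qed


section \<open>Model of BS(1,m) by affine maps\<close>

definition acomp :: "rat \<times> rat \<Rightarrow> rat \<times> rat \<Rightarrow> rat \<times> rat" where
  "acomp f g = (fst f * fst g, fst f * snd g + snd f)"

definition alet :: "nat \<Rightarrow> letter \<Rightarrow> rat \<times> rat" where
  "alet m l = (case l of (False,False) \<Rightarrow> (1,1) | (False,True) \<Rightarrow> (1,-1)
      | (True,False) \<Rightarrow> (of_nat m, 0) | (True,True) \<Rightarrow> (1 / of_nat m, 0))"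

definition aev :: "nat \<Rightarrow> letter list \<Rightarrow> rat \<times> rat" where
  "aev m w = foldr (\<lambda>l f. acomp (alet m l) f) w (1,0)"

lemma acomp_assoc: "acomp (acomp f g) h = acomp f (acomp g h)"
  by (simp add: acomp_def algebra_simps)

lemma aev_append: "aev m (u @ v) = acomp (aev m u) (aev m v)"
  by (induct u) (auto simp: aev_def acomp_def algebra_simps)

lemma aev_cons: "aev m (l # v) = acomp (alet m l) (aev m v)"
  by (simp add: aev_def)

lemma aev_replicate_a: "aev m (replicate k (False,False)) = (1, of_nat k)"
  by (induct k) (auto simp: aev_def acomp_def alet_def)

lemma bs_eq_aev:
  assumes "m > 0" "bs_eq m u v" shows "aev m u = aev m v"
  using assms(2)
proof induct
  case (cancel u g e v)
  have h: "aev m [(g,e),(g,\<not>e)] = (1,0)"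
    using assms(1) by (cases g; cases e) (auto simp: aev_def acomp_def alet_def)
  have "aev m (u @ [(g,e),(g,\<not>e)] @ v) = acomp (aev m u) (acomp (aev m [(g,e),(g,\<not>e)]) (aev m v))"
    by (simp only: aev_append)
  also have "\<dots> = acomp (aev m u) (aev m v)" unfolding h by (simp add: acomp_def)
  also have "\<dots> = aev m (u @ v)" by (simp only: aev_append)
  finally show ?case .
next
  case (relator u v)
  have h: "aev m [(True,False),(False,False),(True,True)] = (1, of_nat m)"
    using assms(1) by (auto simp: aev_def acomp_def alet_def)
  show ?case by (simp only: aev_append h aev_replicate_a)
qed auto

lemma bs_aa_nontriv: "m > 0 \<Longrightarrow> \<not> bs_eq m [(False,False),(False,False)] []"
proof
  assume m: "m > 0" and "bs_eq m [(False,False),(False,False)] []"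
  hence "aev m [(False,False),(False,False)] = aev m []" using bs_eq_aev[OF m] by blast
  thus False by (simp add: aev_def acomp_def alet_def)
qed


locale bsrep =
  fixes m n :: nat and A Ai T Ti :: "rat mat"
  assumes m2: "m \<ge> 2" and n1: "n \<ge> 1"
    and A: "A \<in> Tn_zinv m n" and T: "T \<in> Tn_zinv m n"
    and Ai: "Ai \<in> carrier_mat n n" and AAi: "A * Ai = 1\<^sub>m n" and AiA: "Ai * A = 1\<^sub>m n"
    and Ti: "Ti \<in> carrier_mat n n" and TTi: "T * Ti = 1\<^sub>m n" and TiT: "Ti * T = 1\<^sub>m n"
    and hom: "T * A * Ti = A ^\<^sub>m m"
    and inj: "\<forall>w. word_eval n A Ai T Ti w = 1\<^sub>m n \<longrightarrow> bs_eq m w []"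
begin

definition good :: "rat mat \<Rightarrow> bool" where
  "good X \<longleftrightarrow> X \<in> carrier_mat n n \<and> entries_in (zinv m) n X \<and> upper_triangular X"

abbreviation we where "we \<equiv> word_eval n A Ai T Ti"
abbreviation GS where "GS \<equiv> range we"
abbreviation GG where "GG \<equiv> mat_grp n GS"

lemma m0: "m > 0" using m2 by auto

lemma inv_good:
  assumes X: "X \<in> GLn_zinv m n" and ut: "upper_triangular X" and Y: "Y \<in> carrier_mat n n"
    and XY: "X * Y = 1\<^sub>m n" and YX: "Y * X = 1\<^sub>m n"
  shows "good X" "good Y"
proof -
  obtain B where B: "B \<in> carrier_mat n n" "entries_in (zinv m) n B" "X * B = 1\<^sub>m n" "B * X = 1\<^sub>m n"
    and Xc: "X \<in> carrier_mat n n" and eX: "entries_in (zinv m) n X"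
    using X unfolding GLn_zinv_def by blast
  have e1: "B * (X * Y) = B" using XY right_mult_one_mat[OF B(1)] by simp
  have e2: "(B * X) * Y = Y" using B(4) left_mult_one_mat[OF Y] by simp
  have e3: "B * (X * Y) = (B * X) * Y" using assoc_mult_mat[OF B(1) Xc Y] by simp
  have "B = Y" using e1 e2 e3 by simp
  thus "good Y" using B ut_inverse[OF Xc Y ut XY] Y unfolding good_def by auto
  show "good X" using Xc eX ut unfolding good_def by auto
qed

lemma good_A: "good A" and good_Ai: "good Ai" and good_T: "good T" and good_Ti: "good Ti"
  using inv_good[of A Ai] inv_good[of T Ti] A T Ai AAi AiA Ti TTi TiT
  unfolding Tn_zinv_def by auto

lemma good_carrier: "good X \<Longrightarrow> X \<in> carrier_mat n n" by (simp add: good_def)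

lemma good_mult: "good X \<Longrightarrow> good Y \<Longrightarrow> good (X * Y)"
  unfolding good_def using entries_mult[OF m0] ut_mult by (auto simp: mult_carrier_mat)

lemma good_one: "good (1\<^sub>m n)"
  unfolding good_def entries_in_def by (auto simp: zinv_0 zinv_1)

lemma good_letter: "good (letter_eval A Ai T Ti l)"
  using good_A good_Ai good_T good_Ti
  by (cases l, rename_tac a b, case_tac a; case_tac b) (auto simp: letter_eval_def)

lemma we_Nil: "we [] = 1\<^sub>m n" by (simp add: word_eval_def)

lemma we_Cons: "we (l # w) = letter_eval A Ai T Ti l * we w" by (simp add: word_eval_def)

lemma we_good: "good (we w)"
proof (induct w)
  case Nil show ?case unfolding we_Nil by (rule good_one)
next
  case (Cons l w) show ?case unfolding we_Cons by (rule good_mult[OF good_letter Cons])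
qed

lemma we_append: "we (u @ v) = we u * we v"
proof (induct u)
  case Nil
  have "we v \<in> carrier_mat n n" using we_good[of v] by (simp add: good_def)
  thus ?case unfolding we_Nil append.simps by (rule left_mult_one_mat[symmetric])
next
  case (Cons l u)
  have c: "letter_eval A Ai T Ti l \<in> carrier_mat n n" "we u \<in> carrier_mat n n" "we v \<in> carrier_mat n n"
    using good_letter[of l] we_good[of u] we_good[of v] by (auto simp: good_def)
  have "we ((l # u) @ v) = letter_eval A Ai T Ti l * (we u * we v)"
    unfolding append.simps we_Cons Cons ..
  also have "\<dots> = (letter_eval A Ai T Ti l * we u) * we v"
    by (rule assoc_mult_mat[OF c, symmetric])
  finally show ?case unfolding we_Cons .
qed

definition flipl :: "letter \<Rightarrow> letter" where "flipl l = (fst l, \<not> snd l)"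

lemma letter_flip: "letter_eval A Ai T Ti (flipl l) * letter_eval A Ai T Ti l = 1\<^sub>m n"
  using AAi AiA TTi TiT
  by (cases l, rename_tac a b, case_tac a; case_tac b) (auto simp: letter_eval_def flipl_def)

lemma we_single: "we [l] = letter_eval A Ai T Ti l"
proof -
  have "letter_eval A Ai T Ti l \<in> carrier_mat n n" using good_letter[of l] by (simp add: good_def)
  thus ?thesis unfolding we_Cons we_Nil by (rule right_mult_one_mat)
qed

lemma we_winv: "we (rev (map flipl w)) * we w = 1\<^sub>m n"
proof (induct w)
  case Nil thus ?case by (simp add: we_Nil)
next
  case (Cons l w)
  let ?L = "letter_eval A Ai T Ti"
  let ?R = "we (rev (map flipl w))"
  have c: "?R \<in> carrier_mat n n" "?L (flipl l) \<in> carrier_mat n n" "?L l \<in> carrier_mat n n"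
    "we w \<in> carrier_mat n n"
    using we_good good_letter by (auto simp: good_def)
  have "we (rev (map flipl (l # w))) = ?R * ?L (flipl l)"
    by (simp add: we_append we_single)
  hence "we (rev (map flipl (l # w))) * we (l # w) = (?R * ?L (flipl l)) * (?L l * we w)"
    by (simp add: we_Cons)
  also have "\<dots> = ?R * (?L (flipl l) * (?L l * we w))"
    using assoc_mult_mat[OF c(1) c(2) mult_carrier_mat[OF c(3) c(4)]] by simp
  also have "?L (flipl l) * (?L l * we w) = (?L (flipl l) * ?L l) * we w"
    using c by (simp add: assoc_mult_mat)
  also have "\<dots> = we w" using letter_flip[of l] c(4) by simp
  finally show ?case using Cons by simp
qed

lemma GG_carrier[simp]: "carrier GG = GS"
  by (simp add: mat_grp_def)
lemma GG_simps: "carrier GG = GS" "mult GG = (*)" "one GG = 1\<^sub>m n"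
  by (simp_all add: mat_grp_def)

lemma GS_good0: "x \<in> GS \<Longrightarrow> good x" using we_good by auto

lemma group_GG: "group GG"
proof (rule groupI, unfold GG_simps)
  fix x y assume "x \<in> GS" "y \<in> GS"
  then obtain u v where "x = we u" "y = we v" by auto
  hence "x * y = we (u @ v)" by (simp add: we_append)
  thus "x * y \<in> GS" by simp
next
  have "we [] \<in> GS" by (rule rangeI)
  thus "1\<^sub>m n \<in> GS" unfolding we_Nil .
next
  fix x y z assume "x \<in> GS" "y \<in> GS" "z \<in> GS"
  hence "x \<in> carrier_mat n n" "y \<in> carrier_mat n n" "z \<in> carrier_mat n n"
    using GS_good0 by (simp_all add: good_def)
  thus "x * y * z = x * (y * z)" by (rule assoc_mult_mat)
next
  fix x assume "x \<in> GS"
  hence "x \<in> carrier_mat n n" using GS_good0 by (simp add: good_def)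
  thus "1\<^sub>m n * x = x" by (rule left_mult_one_mat)
next
  fix x assume "x \<in> GS"
  then obtain w where "x = we w" by auto
  thus "\<exists>y\<in>GS. y * x = 1\<^sub>m n"
    by (intro bexI[of _ "we (rev (map flipl w))"] rangeI) (use we_winv[of w] in simp)
qed

lemma GS_good: "x \<in> GS \<Longrightarrow> good x" using we_good by auto

lemma A_in: "A \<in> GS" and T_in: "T \<in> GS" and Ai_in: "Ai \<in> GS" and Ti_in: "Ti \<in> GS"
  using we_single[of "(False,False)"] we_single[of "(True,False)"]
    we_single[of "(False,True)"] we_single[of "(True,True)"]
  by (simp_all add: letter_eval_def) (metis rangeI)+

lemma inv_A: "inv\<^bsub>GG\<^esub> A = Ai" and inv_T: "inv\<^bsub>GG\<^esub> T = Ti"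
  using group.inv_equality[OF group_GG, of Ai A] group.inv_equality[OF group_GG, of Ti T]
    A_in T_in Ai_in Ti_in AiA TiT by (auto simp: GG_simps)

lemma pow_bridge: "x \<in> GS \<Longrightarrow> x [^]\<^bsub>GG\<^esub> (k::nat) = x ^\<^sub>m k"
proof (induct k)
  case 0
  have "dim_row x = n" using GS_good[OF 0] carrier_matD(1) by (auto simp: good_def)
  thus ?case by (simp add: GG_simps)
next
  case (Suc k) thus ?case by (simp add: GG_simps)
qed

lemma hom_GG: "T \<otimes>\<^bsub>GG\<^esub> A \<otimes>\<^bsub>GG\<^esub> inv\<^bsub>GG\<^esub> T = A [^]\<^bsub>GG\<^esub> m"
  using hom by (simp add: inv_T pow_bridge[OF A_in] GG_simps)

end


lemma coprime_decomp:
  fixes x m :: nat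
  assumes "x > 0"
  shows "\<exists>N2 g R. x = N2 * g \<and> coprime N2 m \<and> g dvd m ^ R"
  using assms
proof (induct x rule: less_induct)
  case (less x)
  show ?case
  proof (cases "coprime x m")
    case True thus ?thesis by (intro exI[of _ x] exI[of _ 1] exI[of _ 0]) auto
  next
    case False
    define d where "d = gcd x m"
    have d1: "d \<noteq> 1" using False unfolding d_def by (simp add: coprime_iff_gcd_eq_1)
    have d0: "d > 0" using less(2) unfolding d_def by simp
    obtain x' where x': "x = d * x'" unfolding d_def by (metis gcd_dvd1 dvdE)
    have "x' > 0" using less(2) x' by (cases "x' = 0") auto
    moreover have "x' < x" using x' d0 d1 \<open>x' > 0\<close> by (cases "d = 1"; simp)
    ultimately obtain N2 g R where IH: "x' = N2 * g" "coprime N2 m" "g dvd m ^ R"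
      using less(1) by blast
    have "d dvd m" unfolding d_def by simp
    hence "d * g dvd m * m ^ R" using IH(3) by (rule mult_dvd_mono)
    hence "d * g dvd m ^ Suc R" by simp
    thus ?thesis using IH x' by (intro exI[of _ N2] exI[of _ "d * g"] exI[of _ "Suc R"]) auto
  qed
qed

lemma coprime_pow_minus_one:
  fixes m k :: nat
  assumes "m > 1" "k > 0"
  shows "coprime (m ^ k - 1) m"
proof (rule coprimeI)
  fix c assume c1: "c dvd m ^ k - 1" and c2: "c dvd m"
  have "c dvd m ^ k" using c2 assms(2) by (meson dvd_power dvd_trans)
  hence "c dvd m ^ k - (m ^ k - 1)" using c1 by (rule dvd_diff_nat)
  moreover have "m ^ k - (m ^ k - 1) = 1" using assms by simp
  ultimately show "is_unit c" by simp
qed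

lemma pow_minus_one_dvd:
  fixes y :: nat
  assumes "y \<ge> 1"
  shows "(y - 1) dvd (y ^ q - 1)"
proof (induct q)
  case 0 thus ?case by simp
next
  case (Suc q)
  have "y ^ Suc q - 1 = y * (y ^ q - 1) + (y - 1)"
    using assms by (simp add: algebra_simps diff_mult_distrib2)
  thus ?case using Suc by simp
qed

lemma pow_minus_one_dvd_imp:
  fixes x :: nat
  assumes x: "x \<ge> 2" and D: "D > 0" and d: "(x ^ D - 1) dvd (x ^ E - 1)"
  shows "D dvd E"
proof -
  define q r where "q = E div D" and "r = E mod D"
  have E: "E = q * D + r" and r: "r < D" using D unfolding q_def r_def by auto
  have pos: "x ^ r \<ge> 1" "x ^ (q * D) \<ge> 1" using x by auto
  have "x ^ E - 1 = x ^ r * (x ^ (q * D) - 1) + (x ^ r - 1)"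
    using pos unfolding E by (simp add: power_add diff_mult_distrib2 mult.commute)
  moreover have "(x ^ D - 1) dvd (x ^ (q * D) - 1)"
    using pow_minus_one_dvd[of "x ^ D" q] x by (simp add: power_mult mult.commute)
  ultimately have "(x ^ D - 1) dvd (x ^ r - 1)" using d
    by (metis dvd_add_right_iff dvd_mult)
  moreover have "x ^ r - 1 < x ^ D - 1"
    using r x pos by (simp add: diff_less_mono power_strict_increasing_iff)
  ultimately have "x ^ r - 1 = 0" using nat_dvd_not_less by blast
  hence "x ^ r = 1" using pos by simp
  hence "r = 0" using x by simp
  thus ?thesis using E by simp
qed


context bsrep begin

sublocale grp: group GG by (rule group_GG)

declare GG_carrier[simp del]

lemma A_c: "A \<in> carrier GG" and T_c: "T \<in> carrier GG"
  using A_in T_in by (auto simp: GG_carrier)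

abbreviation tp :: "int \<Rightarrow> rat mat" where "tp a \<equiv> T [^]\<^bsub>GG\<^esub> a"
abbreviation ap :: "int \<Rightarrow> rat mat" where "ap a \<equiv> A [^]\<^bsub>GG\<^esub> a"

lemma tp_c: "tp a \<in> carrier GG" and ap_c: "ap a \<in> carrier GG"
  using T_c A_c by auto

lemma Tm1: "tp a \<otimes>\<^bsub>GG\<^esub> tp b = tp (a + b)"
  by (simp add: grp.int_pow_mult T_c)

lemma Tm2: "x \<in> carrier GG \<Longrightarrow> tp a \<otimes>\<^bsub>GG\<^esub> (tp b \<otimes>\<^bsub>GG\<^esub> x) = tp (a + b) \<otimes>\<^bsub>GG\<^esub> x"
  by (subst grp.m_assoc[symmetric]) (auto simp: Tm1 tp_c)

lemma Am1: "ap a \<otimes>\<^bsub>GG\<^esub> ap b = ap (a + b)"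
  by (simp add: grp.int_pow_mult A_c)

lemma Am2: "x \<in> carrier GG \<Longrightarrow> ap a \<otimes>\<^bsub>GG\<^esub> (ap b \<otimes>\<^bsub>GG\<^esub> x) = ap (a + b) \<otimes>\<^bsub>GG\<^esub> x"
  by (subst grp.m_assoc[symmetric]) (auto simp: Am1 ap_c)

lemma hom_int: "T \<otimes>\<^bsub>GG\<^esub> ap j \<otimes>\<^bsub>GG\<^esub> inv\<^bsub>GG\<^esub> T = ap (int m * j)"
proof -
  have "T \<otimes>\<^bsub>GG\<^esub> ap j \<otimes>\<^bsub>GG\<^esub> inv\<^bsub>GG\<^esub> T = (T \<otimes>\<^bsub>GG\<^esub> A \<otimes>\<^bsub>GG\<^esub> inv\<^bsub>GG\<^esub> T) [^]\<^bsub>GG\<^esub> j"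
    by (rule grp.conj_int_pow[symmetric, OF T_c A_c])
  also have "\<dots> = (ap (int m)) [^]\<^bsub>GG\<^esub> j" by (simp add: hom_GG int_pow_int)
  also have "\<dots> = ap (int m * j)" by (simp add: grp.int_pow_pow A_c)
  finally show ?thesis .
qed

lemma conjA_nat: "T [^]\<^bsub>GG\<^esub> (k::nat) \<otimes>\<^bsub>GG\<^esub> ap j \<otimes>\<^bsub>GG\<^esub> inv\<^bsub>GG\<^esub> (T [^]\<^bsub>GG\<^esub> k) = ap (j * int m ^ k)"
proof (induct k arbitrary: j)
  case 0 thus ?case by (simp add: A_c)
next
  case (Suc k)
  have "T [^]\<^bsub>GG\<^esub> Suc k \<otimes>\<^bsub>GG\<^esub> ap j \<otimes>\<^bsub>GG\<^esub> inv\<^bsub>GG\<^esub> (T [^]\<^bsub>GG\<^esub> Suc k)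
      = T [^]\<^bsub>GG\<^esub> k \<otimes>\<^bsub>GG\<^esub> (T \<otimes>\<^bsub>GG\<^esub> ap j \<otimes>\<^bsub>GG\<^esub> inv\<^bsub>GG\<^esub> T) \<otimes>\<^bsub>GG\<^esub> inv\<^bsub>GG\<^esub> (T [^]\<^bsub>GG\<^esub> k)"
    by (simp add: grp.inv_mult_group grp.m_assoc T_c A_c)
  also have "\<dots> = ap (int m * j * int m ^ k)" unfolding hom_int Suc ..
  finally show ?case by (simp add: mult_ac)
qed

lemma conjA: "0 \<le> k \<Longrightarrow> tp k \<otimes>\<^bsub>GG\<^esub> ap j \<otimes>\<^bsub>GG\<^esub> tp (- k) = ap (j * int m ^ nat k)"
  using conjA_nat[of "nat k" j] by (simp add: grp.int_pow_neg T_c flip: int_pow_int)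

lemma conjA2: "0 \<le> k \<Longrightarrow> x \<in> carrier GG \<Longrightarrow>
    tp k \<otimes>\<^bsub>GG\<^esub> (ap j \<otimes>\<^bsub>GG\<^esub> (tp (- k) \<otimes>\<^bsub>GG\<^esub> x)) = ap (j * int m ^ nat k) \<otimes>\<^bsub>GG\<^esub> x"
  by (simp add: conjA[symmetric] grp.m_assoc tp_c ap_c)

definition F :: "nat \<Rightarrow> int \<Rightarrow> int \<Rightarrow> rat mat" where
  "F k j b = tp (- int k) \<otimes>\<^bsub>GG\<^esub> (ap j \<otimes>\<^bsub>GG\<^esub> tp b)"

lemma F_c: "F k j b \<in> carrier GG" unfolding F_def by (simp add: tp_c ap_c)

lemma move_past: "x \<in> carrier GG \<Longrightarrow> y \<in> carrier GG \<Longrightarrow>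
   x \<otimes>\<^bsub>GG\<^esub> (tp (- k) \<otimes>\<^bsub>GG\<^esub> y) = tp (- k) \<otimes>\<^bsub>GG\<^esub> (tp k \<otimes>\<^bsub>GG\<^esub> (x \<otimes>\<^bsub>GG\<^esub> (tp (- k) \<otimes>\<^bsub>GG\<^esub> y)))"
  by (simp add: Tm2 tp_c)

lemma A_F: "c = 1 \<or> c = -1 \<Longrightarrow> ap c \<otimes>\<^bsub>GG\<^esub> F k j b = F k (c * int m ^ k + j) b"
proof -
  assume "c = 1 \<or> c = -1"
  have "ap c \<otimes>\<^bsub>GG\<^esub> F k j b = tp (- int k) \<otimes>\<^bsub>GG\<^esub> (tp (int k) \<otimes>\<^bsub>GG\<^esub> (ap c \<otimes>\<^bsub>GG\<^esub> (tp (- int k) \<otimes>\<^bsub>GG\<^esub> (ap j \<otimes>\<^bsub>GG\<^esub> tp b))))"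
    unfolding F_def by (rule move_past) (auto simp: ap_c tp_c)
  also have "\<dots> = tp (- int k) \<otimes>\<^bsub>GG\<^esub> (ap (c * int m ^ k) \<otimes>\<^bsub>GG\<^esub> (ap j \<otimes>\<^bsub>GG\<^esub> tp b))"
    using conjA2[of "int k" "ap j \<otimes>\<^bsub>GG\<^esub> tp b" c] by (simp add: ap_c tp_c)
  also have "\<dots> = F k (c * int m ^ k + j) b" unfolding F_def by (simp add: Am2 tp_c)
  finally show ?thesis .
qed

lemma T_F: "tp 1 \<otimes>\<^bsub>GG\<^esub> F k j b = (if k = 0 then F 0 (j * int m) (b + 1) else F (k - 1) j b)"
proof (cases k)
  case 0
  have "tp 1 \<otimes>\<^bsub>GG\<^esub> F k j b = tp 1 \<otimes>\<^bsub>GG\<^esub> (ap j \<otimes>\<^bsub>GG\<^esub> (tp (- 1) \<otimes>\<^bsub>GG\<^esub> tp (b + 1)))"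
    unfolding F_def 0 by (simp add: Tm1 ap_c tp_c)
  also have "\<dots> = ap (j * int m) \<otimes>\<^bsub>GG\<^esub> tp (b + 1)"
    using conjA2[of 1 "tp (b+1)" j] by (simp add: tp_c)
  also have "\<dots> = F 0 (j * int m) (b + 1)" unfolding F_def by (simp add: ap_c tp_c)
  finally show ?thesis using 0 by simp
next
  case (Suc k')
  have "tp 1 \<otimes>\<^bsub>GG\<^esub> F k j b = tp (1 + - int k) \<otimes>\<^bsub>GG\<^esub> (ap j \<otimes>\<^bsub>GG\<^esub> tp b)"
    unfolding F_def by (simp add: Tm2 ap_c tp_c)
  also have "1 + - int k = - int k'" using Suc by simp
  finally show ?thesis using Suc by (simp add: F_def)
qed

lemma Ti_F: "tp (- 1) \<otimes>\<^bsub>GG\<^esub> F k j b = F (Suc k) j b"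
  unfolding F_def by (simp add: Tm2 ap_c tp_c add.commute)

lemma normal_form: "g \<in> GS \<Longrightarrow> \<exists>k j b. g = F k j b"
proof -
  assume "g \<in> GS"
  then obtain w where g: "g = we w" by auto
  have "\<exists>k j b. we w = F k j b"
  proof (induct w)
    case Nil
    have "F 0 0 0 = 1\<^sub>m n" unfolding F_def by (simp add: GG_simps)
    thus ?case by (metis we_Nil)
  next
    case (Cons l w)
    then obtain k j b where IH: "we w = F k j b" by blast
    have we: "we (l # w) = letter_eval A Ai T Ti l \<otimes>\<^bsub>GG\<^esub> F k j b"
      by (simp add: we_Cons IH GG_simps)
    obtain g e where l: "l = (g, e)" by (cases l)
    show ?case
    proof (cases g; cases e)
      assume "g" "e"
      hence "letter_eval A Ai T Ti l = tp (- 1)"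
        using l by (simp add: letter_eval_def grp.int_pow_neg T_c inv_T)
      thus ?case using we Ti_F by metis
    next
      assume "g" "\<not> e"
      hence "letter_eval A Ai T Ti l = tp 1"
        using l by (simp add: letter_eval_def T_c)
      thus ?case using we T_F by metis
    next
      assume "\<not> g" "e"
      hence "letter_eval A Ai T Ti l = ap (- 1)"
        using l by (simp add: letter_eval_def grp.int_pow_neg A_c inv_A)
      thus ?case using we A_F[of "-1" k j b] by metis
    next
      assume "\<not> g" "\<not> e"
      hence "letter_eval A Ai T Ti l = ap 1"
        using l by (simp add: letter_eval_def A_c)
      thus ?case using we A_F[of "1" k j b] by metis
    qed
  qed
  thus ?thesis using g by simp
qed

lemma F_conj: "tp (int k) \<otimes>\<^bsub>GG\<^esub> F k j b \<otimes>\<^bsub>GG\<^esub> tp (- int k) = ap j \<otimes>\<^bsub>GG\<^esub> tp (b - int k)"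
  unfolding F_def by (simp add: grp.m_assoc Tm1 Tm2 ap_c tp_c)

lemma comm_AT: "(ap j \<otimes>\<^bsub>GG\<^esub> tp e) \<otimes>\<^bsub>GG\<^esub> tp 1 \<otimes>\<^bsub>GG\<^esub> inv\<^bsub>GG\<^esub> (ap j \<otimes>\<^bsub>GG\<^esub> tp e) \<otimes>\<^bsub>GG\<^esub> tp (- 1)
    = ap (j - j * int m)"
proof -
  have "(ap j \<otimes>\<^bsub>GG\<^esub> tp e) \<otimes>\<^bsub>GG\<^esub> tp 1 \<otimes>\<^bsub>GG\<^esub> inv\<^bsub>GG\<^esub> (ap j \<otimes>\<^bsub>GG\<^esub> tp e) \<otimes>\<^bsub>GG\<^esub> tp (- 1)
     = ap j \<otimes>\<^bsub>GG\<^esub> (tp e \<otimes>\<^bsub>GG\<^esub> (tp 1 \<otimes>\<^bsub>GG\<^esub> (tp (- e) \<otimes>\<^bsub>GG\<^esub> (ap (- j) \<otimes>\<^bsub>GG\<^esub> tp (- 1)))))"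
    by (simp add: grp.inv_mult_group grp.m_assoc grp.int_pow_neg ap_c tp_c A_c T_c)
  also have "\<dots> = ap j \<otimes>\<^bsub>GG\<^esub> (tp 1 \<otimes>\<^bsub>GG\<^esub> (ap (- j) \<otimes>\<^bsub>GG\<^esub> tp (- 1)))"
    by (simp add: Tm2 ap_c tp_c)
  also have "tp 1 \<otimes>\<^bsub>GG\<^esub> (ap (- j) \<otimes>\<^bsub>GG\<^esub> tp (- 1)) = ap (- j * int m)"
    using conjA[of 1 "- j"] by (simp add: grp.m_assoc ap_c tp_c)
  also have "ap j \<otimes>\<^bsub>GG\<^esub> ap (- j * int m) = ap (j - j * int m)" by (simp add: Am1)
  finally show ?thesis .
qed

lemma F_split: "F k j b = (tp (- int k) \<otimes>\<^bsub>GG\<^esub> (ap j \<otimes>\<^bsub>GG\<^esub> tp (int k))) \<otimes>\<^bsub>GG\<^esub> tp (b - int k)"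
  unfolding F_def by (simp add: grp.m_assoc Tm1 ap_c tp_c)

lemma H_T:
  assumes H: "subgroup H GG" and D: "\<forall>x\<in>GS. x [^]\<^bsub>GG\<^esub> (D::nat) \<in> H" and d: "int D dvd e"
  shows "tp e \<in> H"
proof -
  obtain q where e: "e = int D * q" using d by (auto elim: dvdE)
  have "tp e = (T [^]\<^bsub>GG\<^esub> D) [^]\<^bsub>GG\<^esub> q"
    unfolding e by (simp add: grp.int_pow_pow T_c flip: int_pow_int)
  also have "\<dots> \<in> H" using D T_in grp.subgroup_int_pow_closed[OF H] by blast
  finally show ?thesis .
qed

end


lemma coprime_int_pow: "coprime N (m::nat) \<Longrightarrow> coprime (int N) (int m ^ k)"
  by (simp add: coprime_power_right_iff)

lemma cz_pow_dvd:
  fixes m N :: nat and e :: int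
  assumes m1: "m > 1" and N: "N > 0" and cop: "coprime N m"
    and c: "cz m N (of_nat m powi (2 * e) - 1)"
  shows "int N dvd int m ^ (2 * nat \<bar>e\<bar>) - 1"
proof -
  obtain a k where ak: "(of_nat m powi (2 * e) - 1) / of_nat N = (of_int a / of_nat m ^ k :: rat)"
    using c unfolding cz_def by (auto elim: zinvE)
  define E where "E = nat \<bar>e\<bar>"
  have mk: "(of_nat m :: rat) ^ k \<noteq> 0" "(of_nat N :: rat) \<noteq> 0" "(of_nat m :: rat) ^ (2 * E) \<noteq> 0"
    using m1 N by auto
  have cop2: "coprime (int N) (int m ^ k)" using cop by (rule coprime_int_pow)
  show ?thesis
  proof (cases "e \<ge> 0")
    case True
    hence "of_nat m powi (2 * e) = (of_nat m :: rat) ^ (2 * E)"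
      unfolding E_def by (simp add: power_int_def nat_mult_distrib)
    hence "((of_nat m :: rat) ^ (2 * E) - 1) * of_nat m ^ k = of_nat N * of_int a"
      using ak mk by (simp add: field_simps)
    hence "of_int ((int m ^ (2 * E) - 1) * int m ^ k) = (of_int (int N * a) :: rat)" by simp
    hence "(int m ^ (2 * E) - 1) * int m ^ k = int N * a" by (rule of_int_eq_iff[THEN iffD1])
    hence "int N dvd (int m ^ (2 * E) - 1) * int m ^ k" by (metis dvd_triv_left)
    thus ?thesis using cop2 unfolding E_def by (simp add: coprime_dvd_mult_left_iff)
  next
    case False
    have ne: "nat (- (2 * e)) = 2 * E" unfolding E_def using False by simp
    have "of_nat m powi (2 * e) = 1 / (of_nat m :: rat) ^ (2 * E)"
      using False unfolding power_int_def ne by (simp add: power_inverse divide_inverse)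
    hence "(1 - (of_nat m :: rat) ^ (2 * E)) * of_nat m ^ k = of_nat N * of_int a * of_nat m ^ (2 * E)"
      using ak mk by (simp add: field_simps)
    hence "of_int ((1 - int m ^ (2 * E)) * int m ^ k) = (of_int (int N * (a * int m ^ (2 * E))) :: rat)"
      by (simp add: mult_ac)
    hence "(1 - int m ^ (2 * E)) * int m ^ k = int N * (a * int m ^ (2 * E))"
      by (rule of_int_eq_iff[THEN iffD1])
    hence "int N dvd (1 - int m ^ (2 * E)) * int m ^ k" by (metis dvd_triv_left)
    hence "int N dvd (1 - int m ^ (2 * E))" using cop2 by (simp add: coprime_dvd_mult_left_iff)
    hence "int N dvd - (1 - int m ^ (2 * E))" by (rule dvd_minus_iff[THEN iffD2])
    thus ?thesis unfolding E_def by simp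
  qed
qed

lemma jpart:
  fixes m N2 D g' K t R0 :: nat and a j :: int
  assumes m1: "m > 1" and N2: "N2 > 0" and cop: "coprime N2 m"
    and dec: "D * (m - 1) * nat \<bar>a\<bar> = N2 * g'" and g': "g' dvd m ^ R0" and a: "a \<noteq> 0"
    and c: "cz m N2 (of_nat K * (of_int a / of_nat m ^ t))"
    and K: "int K = \<bar>j - j * int m\<bar>"
  shows "\<exists>R. int D dvd j * int m ^ R"
proof -
  obtain b r where br: "of_nat K * (of_int a / of_nat m ^ t) / of_nat N2 = (of_int b / of_nat m ^ r :: rat)"
    using c unfolding cz_def by (auto elim: zinvE)
  have nz: "(of_nat m :: rat) ^ t \<noteq> 0" "(of_nat m :: rat) ^ r \<noteq> 0" "(of_nat N2 :: rat) \<noteq> 0"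
    using m1 N2 by auto
  have "(of_nat K * of_int a * of_nat m ^ r :: rat) = of_nat N2 * of_int b * of_nat m ^ t"
    using br nz by (simp add: field_simps)
  hence "of_int (int K * a * int m ^ r) = (of_int (int N2 * b * int m ^ t) :: rat)" by simp
  hence e1: "int K * a * int m ^ r = int N2 * b * int m ^ t" by (rule of_int_eq_iff[THEN iffD1])
  have "int (D * (m - 1) * nat \<bar>a\<bar>) = int (N2 * g')" using dec by simp
  hence dec': "int D * (int m - 1) * \<bar>a\<bar> = int N2 * int g'" using m1 by (simp add: of_nat_diff)
  have "int K * a * int m ^ r * int g' = (int D * (int m - 1) * \<bar>a\<bar>) * (b * int m ^ t)"
    unfolding dec' using e1 by (simp add: mult_ac)
  hence "int D * (int m - 1) * \<bar>a\<bar> dvd int K * a * int m ^ r * int g'" by (rule dvdI)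
  hence "int D * (int m - 1) * \<bar>a\<bar> dvd \<bar>int K * a * int m ^ r * int g'\<bar>" by (simp only: dvd_abs_iff)
  also have "\<bar>int K * a * int m ^ r * int g'\<bar> = (int K * int m ^ r * int g') * \<bar>a\<bar>"
    by (simp add: abs_mult mult_ac)
  finally have d1: "int D * (int m - 1) dvd int K * int m ^ r * int g'"
    using a by (simp add: dvd_mult_cancel_right)
  obtain g2 where g2: "m ^ R0 = g' * g2" using g' by (auto elim: dvdE)
  have g2': "int m ^ R0 = int g' * int g2" using g2 by (metis of_nat_mult of_nat_power)
  have "int K * int m ^ r * int g' dvd int K * int m ^ (r + R0)"
    by (simp add: power_add g2' mult.assoc)
  with d1 have "int D * (int m - 1) dvd int K * int m ^ (r + R0)" by (rule dvd_trans)
  moreover have "int K = \<bar>j\<bar> * (int m - 1)"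
  proof -
    have "j - j * int m = - (j * (int m - 1))" by (simp add: algebra_simps)
    hence "int K = \<bar>j * (int m - 1)\<bar>" using K by simp
    also have "\<dots> = \<bar>j\<bar> * (int m - 1)" using m1 by (simp add: abs_mult)
    finally show ?thesis .
  qed
  ultimately have "(int m - 1) * int D dvd (int m - 1) * (\<bar>j\<bar> * int m ^ (r + R0))"
    by (simp add: mult_ac)
  hence "int D dvd \<bar>j\<bar> * int m ^ (r + R0)" using m1 by (subst (asm) dvd_mult_cancel_left) auto
  moreover have "\<bar>j\<bar> * int m ^ (r + R0) = \<bar>j * int m ^ (r + R0)\<bar>" by (simp add: abs_mult)
  ultimately have "int D dvd j * int m ^ (r + R0)" by (simp only: dvd_abs_iff)
  thus ?thesis by blast
qed


definition sunit :: "nat \<Rightarrow> nat \<Rightarrow> rat mat \<Rightarrow> bool" where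
  "sunit n s X \<longleftrightarrow> (\<forall>p<n. \<forall>q<n. q < p + s \<longrightarrow> X $$ (p,q) = (if p = q then 1 else 0))"

lemma sum_two:
  fixes n :: nat
  assumes "a < n" "b < n" "a \<noteq> b" "\<And>r. r < n \<Longrightarrow> r \<noteq> a \<Longrightarrow> r \<noteq> b \<Longrightarrow> f r = (0::rat)"
  shows "(\<Sum>r<n. f r) = f a + f b"
proof -
  have "(\<Sum>r<n. f r) = (\<Sum>r<n. (if r = a then f a else 0) + (if r = b then f b else 0))"
    by (rule sum.cong) (use assms in auto)
  also have "\<dots> = f a + f b" using assms by (simp add: sum.distrib)
  finally show ?thesis .
qed

lemma sunit_mult:
  assumes s: "s \<ge> 1" and X: "X \<in> carrier_mat n n" and Y: "Y \<in> carrier_mat n n"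
    and sX: "sunit n s X" and sY: "sunit n s Y"
  shows "sunit n s (X * Y)" "i + s < n \<Longrightarrow> (X * Y) $$ (i, i + s) = X $$ (i, i+s) + Y $$ (i, i+s)"
proof -
  show "sunit n s (X * Y)" unfolding sunit_def
  proof (intro allI impI)
    fix p q assume pq: "p < n" "q < n" "q < p + s"
    have "(X*Y) $$ (p,q) = (\<Sum>r<n. X $$ (p,r) * Y $$ (r,q))" by (rule mult_entry[OF X Y pq(1,2)])
    also have "\<dots> = X $$ (p,q) * Y $$ (q,q)"
    proof (rule sum_single[OF pq(2)])
      fix r assume r: "r < n" "r \<noteq> q"
      show "X $$ (p,r) * Y $$ (r,q) = 0"
      proof (cases "r < p")
        case True thus ?thesis using sX pq r unfolding sunit_def by auto
      next
        case False thus ?thesis using sY pq r unfolding sunit_def by auto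
      qed
    qed
    also have "Y $$ (q,q) = 1" using sY pq s unfolding sunit_def by auto
    finally show "(X*Y) $$ (p,q) = (if p = q then 1 else 0)" using sX pq unfolding sunit_def by auto
  qed
next
  assume i: "i + s < n"
  have "(X*Y) $$ (i,i+s) = (\<Sum>r<n. X $$ (i,r) * Y $$ (r,i+s))" by (rule mult_entry[OF X Y]) (use i in auto)
  also have "\<dots> = X $$ (i,i) * Y $$ (i,i+s) + X $$ (i,i+s) * Y $$ (i+s,i+s)"
  proof (rule sum_two)
    fix r assume r: "r < n" "r \<noteq> i" "r \<noteq> i + s"
    show "X $$ (i,r) * Y $$ (r,i+s) = 0"
    proof (cases "r < i + s")
      case True thus ?thesis using sX r i unfolding sunit_def by auto
    next
      case False thus ?thesis using sY r i unfolding sunit_def by auto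
    qed
  qed (use i s in auto)
  also have "\<dots> = X $$ (i,i+s) + Y $$ (i,i+s)" using sX sY i s unfolding sunit_def by auto
  finally show "(X * Y) $$ (i, i + s) = X $$ (i, i+s) + Y $$ (i, i+s)" .
qed

lemma sunit_pow:
  assumes s: "s \<ge> 1" and U: "U \<in> carrier_mat n n" and sU: "sunit n s U"
  shows "sunit n s (U ^\<^sub>m k) \<and> (i + s < n \<longrightarrow> (U ^\<^sub>m k) $$ (i, i+s) = of_nat k * U $$ (i, i+s))"
proof (induct k)
  case 0
  have "dim_row U = n" using U by auto
  thus ?case using s by (auto simp: sunit_def)
next
  case (Suc k)
  have c: "U ^\<^sub>m k \<in> carrier_mat n n" using U by simp
  have sk: "sunit n s (U ^\<^sub>m k)" using Suc by simp
  show ?case using sunit_mult(1)[OF s c U sk sU] sunit_mult(2)[OF s c U sk sU] Suc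
    by (auto simp: algebra_simps)
qed

lemma conj_entry:
  assumes X: "X \<in> carrier_mat n n" and Y: "Y \<in> carrier_mat n n" and U: "U \<in> carrier_mat n n"
    and uX: "upper_triangular X" and uY: "upper_triangular Y" and sU: "sunit n s U" and s: "s \<ge> 1"
    and i: "i + s < n"
  shows "(X * U * Y) $$ (i, i+s) = (X * Y) $$ (i, i+s) + X $$ (i,i) * U $$ (i,i+s) * Y $$ (i+s,i+s)"
proof -
  define V where "V = X * U"
  have V: "V \<in> carrier_mat n n" unfolding V_def using X U by simp
  have v1: "V $$ (i,r) = X $$ (i,r)" if r: "r < n" "r < i + s" for r
  proof -
    have "V $$ (i,r) = (\<Sum>p<n. X $$ (i,p) * U $$ (p,r))" unfolding V_def
      by (rule mult_entry[OF X U]) (use i r in auto)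
    also have "\<dots> = X $$ (i,r) * U $$ (r,r)"
    proof (rule sum_single[OF r(1)])
      fix p assume p: "p < n" "p \<noteq> r"
      show "X $$ (i,p) * U $$ (p,r) = 0"
      proof (cases "p < i")
        case True thus ?thesis using uX X i p by (auto simp: upper_triangular_def)
      next
        case False thus ?thesis using sU p r unfolding sunit_def by auto
      qed
    qed
    also have "U $$ (r,r) = 1" using sU r s unfolding sunit_def by auto
    finally show ?thesis by simp
  qed
  have v2: "V $$ (i,i+s) = X $$ (i,i) * U $$ (i,i+s) + X $$ (i,i+s)"
  proof -
    have "V $$ (i,i+s) = (\<Sum>p<n. X $$ (i,p) * U $$ (p,i+s))" unfolding V_def
      by (rule mult_entry[OF X U]) (use i in auto)
    also have "\<dots> = X $$ (i,i) * U $$ (i,i+s) + X $$ (i,i+s) * U $$ (i+s,i+s)"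
    proof (rule sum_two)
      fix p assume p: "p < n" "p \<noteq> i" "p \<noteq> i + s"
      show "X $$ (i,p) * U $$ (p,i+s) = 0"
      proof (cases "p < i")
        case True thus ?thesis using uX X i p by (auto simp: upper_triangular_def)
      next
        case False thus ?thesis using sU p i unfolding sunit_def by auto
      qed
    qed (use i s in auto)
    also have "U $$ (i+s,i+s) = 1" using sU i s unfolding sunit_def by auto
    finally show ?thesis by simp
  qed
  have "(V * Y) $$ (i,i+s) - (X * Y) $$ (i,i+s) = (\<Sum>r<n. (V $$ (i,r) - X $$ (i,r)) * Y $$ (r,i+s))"
  proof -
    have e1: "(V * Y) $$ (i,i+s) = (\<Sum>r<n. V $$ (i,r) * Y $$ (r,i+s))"
      by (rule mult_entry[OF V Y]) (use i in auto)
    have e2: "(X * Y) $$ (i,i+s) = (\<Sum>r<n. X $$ (i,r) * Y $$ (r,i+s))"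
      by (rule mult_entry[OF X Y]) (use i in auto)
    show ?thesis unfolding e1 e2 by (simp add: sum_subtractf[symmetric] left_diff_distrib)
  qed
  also have "\<dots> = (V $$ (i,i+s) - X $$ (i,i+s)) * Y $$ (i+s,i+s)"
  proof (rule sum_single)
    show "i + s < n" by fact
    fix r assume r: "r < n" "r \<noteq> i + s"
    show "(V $$ (i,r) - X $$ (i,r)) * Y $$ (r,i+s) = 0"
    proof (cases "r < i + s")
      case True thus ?thesis using v1 r by simp
    next
      case False thus ?thesis using uY Y r by (auto simp: upper_triangular_def)
    qed
  qed
  also have "\<dots> = X $$ (i,i) * U $$ (i,i+s) * Y $$ (i+s,i+s)" using v2 by simp
  finally show ?thesis unfolding V_def by simp
qed


context bsrep begin
lemma H_A:
  assumes H: "subgroup H GG" and D: "\<forall>x\<in>GS. x [^]\<^bsub>GG\<^esub> (D::nat) \<in> H"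
    and d: "int D dvd j * int m ^ R"
  shows "tp (- int k) \<otimes>\<^bsub>GG\<^esub> (ap j \<otimes>\<^bsub>GG\<^esub> tp (int k)) \<in> H"
proof -
  obtain q where q: "j * int m ^ R = int D * q" using d by (auto elim: dvdE)
  have "ap j = tp (- int R) \<otimes>\<^bsub>GG\<^esub> (tp (int R) \<otimes>\<^bsub>GG\<^esub> (ap j \<otimes>\<^bsub>GG\<^esub> (tp (- int R) \<otimes>\<^bsub>GG\<^esub> tp (int R))))"
    by (simp add: Tm1 Tm2 ap_c tp_c)
  also have "\<dots> = tp (- int R) \<otimes>\<^bsub>GG\<^esub> (ap (j * int m ^ R) \<otimes>\<^bsub>GG\<^esub> tp (int R))"
    using conjA2[of "int R" "tp (int R)" j] by (simp add: tp_c)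
  finally have aj: "ap j = tp (- int R) \<otimes>\<^bsub>GG\<^esub> (ap (j * int m ^ R) \<otimes>\<^bsub>GG\<^esub> tp (int R))" .
  define g where "g = tp (- int (k + R))"
  have gi: "g = inv\<^bsub>GG\<^esub> (tp (int (k + R)))" unfolding g_def by (rule grp.int_pow_neg[OF T_c])
  have g: "g \<in> carrier GG" "inv\<^bsub>GG\<^esub> g = tp (int (k + R))"
    by (simp add: g_def tp_c) (simp only: gi grp.inv_inv[OF tp_c])
  have "tp (- int k) \<otimes>\<^bsub>GG\<^esub> (ap j \<otimes>\<^bsub>GG\<^esub> tp (int k))
      = g \<otimes>\<^bsub>GG\<^esub> ap (int D * q) \<otimes>\<^bsub>GG\<^esub> inv\<^bsub>GG\<^esub> g"
    unfolding aj g(2) unfolding g_def q[symmetric]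
    by (simp add: grp.m_assoc Tm1 Tm2 ap_c tp_c add.commute)
  also have "\<dots> = (g \<otimes>\<^bsub>GG\<^esub> A \<otimes>\<^bsub>GG\<^esub> inv\<^bsub>GG\<^esub> g) [^]\<^bsub>GG\<^esub> (int D * q)"
    by (rule grp.conj_int_pow[symmetric, OF g(1) A_c])
  also have "\<dots> = ((g \<otimes>\<^bsub>GG\<^esub> A \<otimes>\<^bsub>GG\<^esub> inv\<^bsub>GG\<^esub> g) [^]\<^bsub>GG\<^esub> D) [^]\<^bsub>GG\<^esub> q"
    using g(1) A_c by (simp add: grp.int_pow_pow flip: int_pow_int)
  also have "\<dots> \<in> H"
  proof -
    have "g \<otimes>\<^bsub>GG\<^esub> A \<otimes>\<^bsub>GG\<^esub> inv\<^bsub>GG\<^esub> g \<in> GS" 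
    proof -
      have "g \<otimes>\<^bsub>GG\<^esub> A \<otimes>\<^bsub>GG\<^esub> inv\<^bsub>GG\<^esub> g \<in> carrier GG" using g(1) A_c by simp
      thus ?thesis by (simp only: GG_carrier)
    qed
    thus ?thesis using D grp.subgroup_int_pow_closed[OF H] by blast
  qed
  finally show ?thesis .
qed

end


lemma rat_root_one:
  fixes x :: rat and m :: nat
  assumes x0: "x \<noteq> 0" and xm: "x ^ m = x" and m2: "m \<ge> 2"
  shows "x * x = 1"
proof -
  have "x ^ (m - 1) * x = x ^ m" by (rule power_minus_mult) (use m2 in simp)
  hence "x ^ (m - 1) * x = 1 * x" using xm by simp
  hence "x ^ (m - 1) = 1" using mult_right_cancel[OF x0] by blast
  hence "\<bar>x\<bar> ^ (m - 1) = 1 ^ (m - 1)" by (simp add: power_abs[symmetric])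
  hence "\<bar>x\<bar> = 1" using m2 by (subst (asm) power_eq_iff_eq_base) auto
  thus ?thesis by (metis abs_mult_self_eq mult_1)
qed

lemma c1_mult:
  assumes m: "m > 0" and x: "x \<in> zinv m" and y: "y \<in> zinv m"
    and cx: "cz m N (x - 1)" and cy: "cz m N (y - 1)"
  shows "cz m N (x * y - 1)" "x * y \<in> zinv m"
proof -
  have eq: "x * y - 1 = x * (y - 1) + (x - 1)" by (simp add: algebra_simps)
  show "cz m N (x * y - 1)" unfolding eq by (rule cz_add[OF m cz_mult_l[OF x cy] cx])
  show "x * y \<in> zinv m" by (rule zinv_mult[OF x y])
qed

context bsrep begin

lemma GS_c: "x \<in> GS \<Longrightarrow> x \<in> carrier GG" by (simp add: GG_carrier)
lemma c_GS: "x \<in> carrier GG \<Longrightarrow> x \<in> GS" by (simp add: GG_carrier)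
lemma mulGG: "x \<otimes>\<^bsub>GG\<^esub> y = x * y" by (simp add: GG_simps)
lemma oneGG: "\<one>\<^bsub>GG\<^esub> = 1\<^sub>m n" by (simp add: GG_simps)

lemma invGG: assumes x: "x \<in> GS"
  shows "inv\<^bsub>GG\<^esub> x \<in> GS" "x * inv\<^bsub>GG\<^esub> x = 1\<^sub>m n" "inv\<^bsub>GG\<^esub> x * x = 1\<^sub>m n"
  using grp.inv_closed[OF GS_c[OF x]] grp.r_inv[OF GS_c[OF x]] grp.l_inv[OF GS_c[OF x]]
  by (simp_all add: GG_carrier mulGG oneGG)

lemma mul_GS: "x \<in> GS \<Longrightarrow> y \<in> GS \<Longrightarrow> x * y \<in> GS"
  using grp.m_closed[OF GS_c GS_c] by (simp add: mulGG GG_carrier)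

lemma good_c: "x \<in> GS \<Longrightarrow> x \<in> carrier_mat n n" using GS_good good_def by simp
lemma good_e: "x \<in> GS \<Longrightarrow> entries_in (zinv m) n x" using GS_good good_def by simp
lemma good_u: "x \<in> GS \<Longrightarrow> upper_triangular x" using GS_good good_def by simp

lemma ap_GS: "ap j \<in> GS" and tp_GS: "tp j \<in> GS" using ap_c tp_c by (auto simp: GG_carrier)

abbreviation cI where "cI N x \<equiv> eqv m n N x (1\<^sub>m n)"

lemma cI_mul: assumes x: "x \<in> GS" and y: "y \<in> GS" and cx: "cI N x" and cy: "cI N y"
  shows "cI N (x * y)"
proof -
  have "eqv m n N (x * y) (1\<^sub>m n * y)"
    by (rule eqv_mult_right[OF m0 good_c[OF y] good_c[OF x] one_carrier_mat good_e[OF y] cx])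
  hence "eqv m n N (x * y) y" using left_mult_one_mat[OF good_c[OF y]] by simp
  thus ?thesis using cy eqv_trans[OF m0] by blast
qed

lemma cI_inv: assumes x: "x \<in> GS" and cx: "cI N x" shows "cI N (inv\<^bsub>GG\<^esub> x)"
proof -
  note ix = invGG[OF x]
  have "eqv m n N (1\<^sub>m n * inv\<^bsub>GG\<^esub> x) (x * inv\<^bsub>GG\<^esub> x)"
    by (rule eqv_mult_right[OF m0 good_c[OF ix(1)] one_carrier_mat good_c[OF x] good_e[OF ix(1)] eqv_sym[OF cx]])
  thus ?thesis using left_mult_one_mat[OF good_c[OF ix(1)]] ix(2) by simp
qed

lemma cI_conj: assumes x: "x \<in> GS" and y: "y \<in> GS" and cx: "cI N x"
  shows "cI N (y * x * inv\<^bsub>GG\<^esub> y)"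
proof -
  note iy = invGG[OF y]
  have "eqv m n N (y * x) (y * 1\<^sub>m n)"
    by (rule eqv_mult_left[OF m0 good_c[OF y] good_c[OF x] one_carrier_mat good_e[OF y] cx])
  hence e1: "eqv m n N (y * x) y" using right_mult_one_mat[OF good_c[OF y]] by simp
  have "eqv m n N (y * x * inv\<^bsub>GG\<^esub> y) (y * inv\<^bsub>GG\<^esub> y)"
    by (rule eqv_mult_right[OF m0 good_c[OF iy(1)] good_c[OF mul_GS[OF y x]] good_c[OF y] good_e[OF iy(1)] e1])
  thus ?thesis using iy(2) by simp
qed

lemma diag_mul: "x \<in> GS \<Longrightarrow> y \<in> GS \<Longrightarrow> i < n \<Longrightarrow> (x * y) $$ (i,i) = x $$ (i,i) * y $$ (i,i)"
  by (rule ut_diag_mult[OF good_c good_c good_u good_u])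

lemma diag_one: "i < n \<Longrightarrow> (1\<^sub>m n) $$ (i,i) = (1::rat)" by simp

lemma diag_inv: assumes x: "x \<in> GS" and i: "i < n"
  shows "(inv\<^bsub>GG\<^esub> x) $$ (i,i) = inverse (x $$ (i,i))"
proof -
  note ix = invGG[OF x]
  have "x $$ (i,i) * (inv\<^bsub>GG\<^esub> x) $$ (i,i) = 1"
    using diag_mul[OF x ix(1) i] ix(2) i by simp
  thus ?thesis by (rule inverse_unique[symmetric])
qed

lemma diag_pow_nat: assumes x: "x \<in> GS" and i: "i < n"
  shows "(x [^]\<^bsub>GG\<^esub> (k::nat)) $$ (i,i) = x $$ (i,i) ^ k"
proof (induct k)
  case 0 thus ?case using i by (simp add: oneGG)
next
  case (Suc k)
  have xk: "x [^]\<^bsub>GG\<^esub> k \<in> GS" using grp.nat_pow_closed[OF GS_c[OF x]] by (simp add: GG_carrier)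
  show ?case using diag_mul[OF xk x i] Suc by (simp add: mulGG)
qed

lemma diag_pow: assumes x: "x \<in> GS" and i: "i < n"
  shows "(x [^]\<^bsub>GG\<^esub> (j::int)) $$ (i,i) = x $$ (i,i) powi j"
proof (cases "j < 0")
  case True
  then obtain k where k: "j = - int k" by (metis minus_minus nonneg_int_cases neg_0_less_iff_less less_imp_le)
  have xk: "x [^]\<^bsub>GG\<^esub> k \<in> GS" using grp.nat_pow_closed[OF GS_c[OF x]] by (simp add: GG_carrier)
  have "(x [^]\<^bsub>GG\<^esub> j) = inv\<^bsub>GG\<^esub> (x [^]\<^bsub>GG\<^esub> k)"
    unfolding k by (rule grp.int_pow_neg_int[OF GS_c[OF x]])
  hence "(x [^]\<^bsub>GG\<^esub> j) $$ (i,i) = inverse (x $$ (i,i) ^ k)"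
    using diag_inv[OF xk i] diag_pow_nat[OF x i] by simp
  also have "\<dots> = x $$ (i,i) powi j" unfolding k by (simp only: power_int_minus power_int_of_nat)
  finally show ?thesis .
next
  case False
  then obtain k where k: "j = int k" by (metis nonneg_int_cases not_less)
  show ?thesis unfolding k by (simp only: int_pow_int power_int_of_nat diag_pow_nat[OF x i])
qed

lemma eps_sq: assumes i: "i < n" shows "A $$ (i,i) * A $$ (i,i) = 1"
proof -
  have TA: "T * A \<in> GS" by (rule mul_GS[OF T_in A_in])
  have d1: "(T * A * Ti) $$ (i,i) = T $$ (i,i) * A $$ (i,i) * Ti $$ (i,i)"
    using diag_mul[OF TA Ti_in i] diag_mul[OF T_in A_in i] by simp
  have d2: "T $$ (i,i) * Ti $$ (i,i) = 1" using diag_mul[OF T_in Ti_in i] TTi i by simp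
  have "(A ^\<^sub>m m) $$ (i,i) = A $$ (i,i) ^ m"
    using diag_pow_nat[OF A_in i, of m] pow_bridge[OF A_in, of m] by simp
  hence "A $$ (i,i) ^ m = A $$ (i,i)" using d1 d2 hom by (simp add: mult_ac)
  moreover have "A $$ (i,i) \<noteq> 0" using diag_mul[OF A_in Ai_in i] AAi i by auto
  ultimately show ?thesis using rat_root_one m2 by blast
qed

lemma U_GS: "A * A \<in> GS" by (rule mul_GS[OF A_in A_in])

lemma U_ne: "A * A \<noteq> 1\<^sub>m n"
proof
  assume U: "A * A = 1\<^sub>m n"
  have "we [(False,False),(False,False)] = A * (A * 1\<^sub>m n)"
    by (simp add: we_Cons we_Nil letter_eval_def)
  also have "\<dots> = 1\<^sub>m n" using U right_mult_one_mat[OF good_c[OF A_in]] by simp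
  finally have "bs_eq m [(False,False),(False,False)] []" using inj by blast
  thus False using bs_aa_nontriv[OF m0] by blast
qed

lemma level: "\<exists>s i. s \<ge> 1 \<and> i + s < n \<and> sunit n s (A * A) \<and> (A * A) $$ (i, i+s) \<noteq> 0"
proof -
  let ?U = "A * A"
  have Uc: "?U \<in> carrier_mat n n" by (rule good_c[OF U_GS])
  have Uu: "upper_triangular ?U" by (rule good_u[OF U_GS])
  have Ud: "?U $$ (p,p) = 1" if "p < n" for p
    using diag_mul[OF A_in A_in that] eps_sq[OF that] by simp
  have "\<exists>p q. p < n \<and> q < n \<and> ?U $$ (p,q) \<noteq> (1\<^sub>m n) $$ (p,q)"
  proof (rule ccontr)
    assume "\<not> ?thesis"
    hence "?U = 1\<^sub>m n" using Uc by (intro eq_matI) auto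
    thus False using U_ne by simp
  qed
  then obtain p q where pq: "p < n" "q < n" "?U $$ (p,q) \<noteq> (1\<^sub>m n) $$ (p,q)" by blast
  have "p < q"
  proof (rule ccontr)
    assume "\<not> p < q"
    hence "q < p \<or> q = p" by auto
    thus False using pq Uu Ud Uc by (auto simp: upper_triangular_def)
  qed
  define P where "P s \<longleftrightarrow> s \<ge> 1 \<and> (\<exists>i. i + s < n \<and> ?U $$ (i,i+s) \<noteq> 0)" for s
  have "P (q - p)" unfolding P_def using pq \<open>p < q\<close>
    by (intro conjI exI[of _ p]) auto
  define s where "s = (LEAST s. P s)"
  have Ps: "P s" unfolding s_def by (rule LeastI) fact
  have mn: "\<not> P s'" if "s' < s" for s' using not_less_Least[of s' P] that unfolding s_def by blast
  have "sunit n s ?U" unfolding sunit_def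
  proof (intro allI impI)
    fix p' q' assume pq': "p' < n" "q' < n" "q' < p' + s"
    show "?U $$ (p',q') = (if p' = q' then 1 else 0)"
    proof (cases "q' < p'")
      case True thus ?thesis using Uu Uc pq' by (auto simp: upper_triangular_def)
    next
      case False
      show ?thesis
      proof (cases "q' = p'")
        case True thus ?thesis using Ud pq' by simp
      next
        case False2: False
        have lt: "p' < q'" using False2 \<open>\<not> q' < p'\<close> by simp
        hence np: "\<not> P (q' - p')" using mn pq' by simp
        have eq: "p' + (q' - p') = q'" using lt by simp
        have d1: "q' - p' \<ge> 1" using lt by simp
        have all: "\<forall>i. i + (q' - p') < n \<longrightarrow> ?U $$ (i, i + (q' - p')) = 0"
          using np d1 unfolding P_def by blast
        have lt2: "p' + (q' - p') < n" using eq pq' by simp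
        have "?U $$ (p', p' + (q' - p')) = 0" using all lt2 by blast
        hence "?U $$ (p', q') = 0" unfolding eq .
        thus ?thesis using False2 by simp
      qed
    qed
  qed
  thus ?thesis using Ps unfolding P_def by blast
qed

lemma hom_U: "T * (A * A) * Ti = (A * A) ^\<^sub>m m"
proof -
  have a2: "A [^]\<^bsub>GG\<^esub> (2::nat) = A \<otimes>\<^bsub>GG\<^esub> A" by (simp add: numeral_2_eq_2 A_c)
  have "T \<otimes>\<^bsub>GG\<^esub> (A \<otimes>\<^bsub>GG\<^esub> A) \<otimes>\<^bsub>GG\<^esub> inv\<^bsub>GG\<^esub> T
      = (T \<otimes>\<^bsub>GG\<^esub> A \<otimes>\<^bsub>GG\<^esub> inv\<^bsub>GG\<^esub> T) [^]\<^bsub>GG\<^esub> (2::nat)"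
    unfolding a2[symmetric] by (rule grp.conj_nat_pow[symmetric, OF T_c A_c])
  also have "\<dots> = A [^]\<^bsub>GG\<^esub> (m * 2)" unfolding hom_GG by (simp add: grp.nat_pow_pow A_c)
  also have "\<dots> = (A [^]\<^bsub>GG\<^esub> (2::nat)) [^]\<^bsub>GG\<^esub> m" by (simp add: grp.nat_pow_pow A_c mult.commute)
  finally have "T \<otimes>\<^bsub>GG\<^esub> (A \<otimes>\<^bsub>GG\<^esub> A) \<otimes>\<^bsub>GG\<^esub> inv\<^bsub>GG\<^esub> T = (A \<otimes>\<^bsub>GG\<^esub> A) [^]\<^bsub>GG\<^esub> m"
    unfolding a2 .
  thus ?thesis using pow_bridge[OF U_GS] by (simp add: mulGG inv_T)
qed

lemma key_m:
  assumes s: "s \<ge> 1" and i: "i + s < n" and sU: "sunit n s (A * A)" and u: "(A * A) $$ (i,i+s) \<noteq> 0"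
  shows "T $$ (i,i) * Ti $$ (i+s,i+s) = of_nat m"
proof -
  have "(T * (A * A) * Ti) $$ (i,i+s) = (T * Ti) $$ (i,i+s) + T $$ (i,i) * (A * A) $$ (i,i+s) * Ti $$ (i+s,i+s)"
    by (rule conj_entry[OF good_c[OF T_in] good_c[OF Ti_in] good_c[OF U_GS] good_u[OF T_in] good_u[OF Ti_in] sU s i])
  also have "(T * Ti) $$ (i,i+s) = 0" using TTi i s by simp
  finally have e1: "(T * (A * A) * Ti) $$ (i,i+s) = T $$ (i,i) * Ti $$ (i+s,i+s) * (A * A) $$ (i,i+s)"
    by (simp add: mult_ac)
  have "T $$ (i,i) * Ti $$ (i+s,i+s) * (A * A) $$ (i,i+s) = (T * (A * A) * Ti) $$ (i,i+s)"
    by (rule e1[symmetric])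
  also have "\<dots> = ((A * A) ^\<^sub>m m) $$ (i,i+s)" by (simp only: hom_U)
  also have "\<dots> = of_nat m * (A * A) $$ (i,i+s)"
    using sunit_pow[OF s good_c[OF U_GS] sU, of m i] i by simp
  finally have "T $$ (i,i) * Ti $$ (i+s,i+s) * (A * A) $$ (i,i+s) = of_nat m * (A * A) $$ (i,i+s)" .
  hence "(T $$ (i,i) * Ti $$ (i+s,i+s) - of_nat m) * (A * A) $$ (i,i+s) = 0"
    by (simp add: algebra_simps)
  thus ?thesis using u by simp
qed

end

context bsrep begin

lemma cI_entry: "cI N x \<Longrightarrow> p < n \<Longrightarrow> q < n \<Longrightarrow> cz m N (x $$ (p,q) - (if p = q then 1 else 0))"
  unfolding eqv_def by simp

lemma exp_part:
  assumes i: "i + s < n" and lam: "T $$ (i,i) * Ti $$ (i+s,i+s) = of_nat m"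
    and ch: "cI N (ap j \<otimes>\<^bsub>GG\<^esub> tp e)"
  shows "cz m N (of_nat m powi (2 * e) - 1)"
proof -
  define h where "h = ap j \<otimes>\<^bsub>GG\<^esub> tp e"
  define i' where "i' = i + s"
  have ii: "i < n" "i' < n" using i unfolding i'_def by auto
  have h_eq: "h = ap j * tp e" by (simp add: h_def mulGG)
  have hG: "h \<in> GS" unfolding h_eq by (rule mul_GS[OF ap_GS tp_GS])
  have hi: "inv\<^bsub>GG\<^esub> h \<in> GS" by (rule invGG(1)[OF hG])
  have dh: "h $$ (p,p) = A $$ (p,p) powi j * T $$ (p,p) powi e" if "p < n" for p
    using diag_mul[OF ap_GS tp_GS that] diag_pow[OF A_in that] diag_pow[OF T_in that] h_eq by simp
  define x where "x = h $$ (i,i)"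
  define y where "y = (inv\<^bsub>GG\<^esub> h) $$ (i',i')"
  have chh: "cI N h" using ch unfolding h_def .
  have cx: "cz m N (x - 1)" using cI_entry[OF chh ii(1) ii(1)] unfolding x_def by simp
  have cy: "cz m N (y - 1)" using cI_entry[OF cI_inv[OF hG chh] ii(2) ii(2)] unfolding y_def by simp
  have zx: "x \<in> zinv m" using good_e[OF hG] ii(1) unfolding entries_in_def x_def by auto
  have zy: "y \<in> zinv m" using good_e[OF hi] ii(2) unfolding entries_in_def y_def by auto
  note c1 = c1_mult[OF m0 zx zx cx cx]
  note c2 = c1_mult[OF m0 zy zy cy cy]
  note c3 = c1_mult[OF m0 c1(2) c2(2) c1(1) c2(1)]
  define eps where "eps = A $$ (i,i)"
  define eps' where "eps' = A $$ (i',i')"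
  define lam where "lam = T $$ (i,i)"
  define lam' where "lam' = T $$ (i',i')"
  have ee: "eps * eps = 1" "eps' * eps' = 1" unfolding eps_def eps'_def using eps_sq ii by auto
  have tinv: "Ti $$ (i',i') = inverse lam'"
    using diag_inv[OF T_in ii(2)] inv_T unfolding lam'_def by simp
  have lm: "lam * inverse lam' = of_nat m" using lam tinv unfolding lam_def i'_def by simp
  have l0: "lam' \<noteq> 0" using lm m0 by auto
  have lam_eq: "lam = of_nat m * lam'" using lm l0 by (simp add: field_simps)
  have xx: "x * x = (lam * lam) powi e"
  proof -
    have "x * x = (eps powi j * eps powi j) * (lam powi e * lam powi e)"
      unfolding x_def dh[OF ii(1)] eps_def lam_def by (simp add: mult_ac)
    also have "eps powi j * eps powi j = 1" by (simp add: power_int_mult_distrib[symmetric] ee)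
    also have "lam powi e * lam powi e = (lam * lam) powi e" by (simp add: power_int_mult_distrib)
    finally show ?thesis by simp
  qed
  have yy: "y * y = inverse ((lam' * lam') powi e)"
  proof -
    have "y = inverse (eps' powi j * lam' powi e)"
      unfolding y_def diag_inv[OF hG ii(2)] dh[OF ii(2)] eps'_def lam'_def ..
    hence "y * y = inverse ((eps' powi j * eps' powi j) * (lam' powi e * lam' powi e))"
      by (simp add: mult_ac)
    also have "eps' powi j * eps' powi j = 1" by (simp add: power_int_mult_distrib[symmetric] ee)
    also have "lam' powi e * lam' powi e = (lam' * lam') powi e" by (simp add: power_int_mult_distrib)
    finally show ?thesis by simp
  qed
  have nz: "(lam' * lam') powi e \<noteq> 0" using l0 by simp
  have "x * x * (y * y) = (of_nat m * of_nat m) powi e * (lam' * lam') powi e * inverse ((lam' * lam') powi e)"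
    unfolding xx yy lam_eq by (simp add: power_int_mult_distrib mult_ac)
  also have "\<dots> = (of_nat m * of_nat m) powi e" using nz by simp
  also have "(of_nat m * of_nat m :: rat) = of_nat m powi 2" by (simp add: power2_eq_square)
  also have "(of_nat m powi 2) powi e = (of_nat m :: rat) powi (2 * e)" by (simp add: power_int_mult)
  finally show ?thesis using c3(1) by simp
qed

lemma jcz:
  assumes s: "s \<ge> 1" and i: "i + s < n" and sU: "sunit n s (A * A)"
    and ch: "cI N (ap j \<otimes>\<^bsub>GG\<^esub> tp e)"
  shows "cz m N (of_nat (nat \<bar>j - j * int m\<bar>) * (A * A) $$ (i,i+s))"
proof -
  define h where "h = ap j \<otimes>\<^bsub>GG\<^esub> tp e"
  have hG: "h \<in> GS" unfolding h_def mulGG by (rule mul_GS[OF ap_GS tp_GS])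
  have hc: "h \<in> carrier GG" by (rule GS_c[OF hG])
  have hi: "inv\<^bsub>GG\<^esub> h \<in> GS" by (rule invGG(1)[OF hG])
  have chh: "cI N h" using ch unfolding h_def .
  have t1: "tp 1 = T" by (simp add: T_c)
  have t2: "tp (- 1) = inv\<^bsub>GG\<^esub> T" by (rule grp.int_pow_neg[OF T_c, of 1, simplified grp.int_pow_1[OF T_c]])
  have "h \<otimes>\<^bsub>GG\<^esub> tp 1 \<otimes>\<^bsub>GG\<^esub> inv\<^bsub>GG\<^esub> h \<otimes>\<^bsub>GG\<^esub> tp (- 1) = ap (j - j * int m)"
    unfolding h_def by (rule comm_AT)
  hence "h \<otimes>\<^bsub>GG\<^esub> (T \<otimes>\<^bsub>GG\<^esub> inv\<^bsub>GG\<^esub> h \<otimes>\<^bsub>GG\<^esub> inv\<^bsub>GG\<^esub> T) = ap (j - j * int m)"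
    unfolding t1 t2 using hc T_c by (simp add: grp.m_assoc)
  hence weq: "h * (T * inv\<^bsub>GG\<^esub> h * Ti) = ap (j - j * int m)" by (simp add: mulGG inv_T)
  have "cI N (T * inv\<^bsub>GG\<^esub> h * inv\<^bsub>GG\<^esub> T)" by (rule cI_conj[OF hi T_in cI_inv[OF hG chh]])
  hence "cI N (T * inv\<^bsub>GG\<^esub> h * Ti)" by (simp add: inv_T)
  hence "cI N (h * (T * inv\<^bsub>GG\<^esub> h * Ti))"
    using cI_mul[OF hG _ chh] mul_GS[OF mul_GS[OF T_in hi] Ti_in] by blast
  hence cc: "cI N (ap (j - j * int m))" using weq by simp
  define c where "c = j - j * int m"
  define K where "K = nat \<bar>c\<bar>"
  have aK: "cI N (A [^]\<^bsub>GG\<^esub> K)"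
  proof (cases "c \<ge> 0")
    case True
    hence "ap c = A [^]\<^bsub>GG\<^esub> K" unfolding K_def by (simp add: int_pow_int[symmetric])
    thus ?thesis using cc unfolding c_def by simp
  next
    case False
    hence c: "c = - int K" unfolding K_def by simp
    have "ap c = inv\<^bsub>GG\<^esub> (A [^]\<^bsub>GG\<^esub> K)" unfolding c by (rule grp.int_pow_neg_int[OF A_c])
    hence "A [^]\<^bsub>GG\<^esub> K = inv\<^bsub>GG\<^esub> (ap c)" using A_c by simp
    thus ?thesis using cI_inv[OF ap_GS cc[folded c_def]] by simp
  qed
  have AK: "A [^]\<^bsub>GG\<^esub> K \<in> GS" using grp.nat_pow_closed[OF A_c] by (simp add: GG_carrier)
  have "(A * A) ^\<^sub>m K = (A \<otimes>\<^bsub>GG\<^esub> A) [^]\<^bsub>GG\<^esub> K" using pow_bridge[OF U_GS] by (simp add: mulGG)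
  also have "A \<otimes>\<^bsub>GG\<^esub> A = A [^]\<^bsub>GG\<^esub> (2::nat)" by (simp add: numeral_2_eq_2 A_c)
  also have "(A [^]\<^bsub>GG\<^esub> (2::nat)) [^]\<^bsub>GG\<^esub> K = A [^]\<^bsub>GG\<^esub> K \<otimes>\<^bsub>GG\<^esub> A [^]\<^bsub>GG\<^esub> K"
    by (simp add: grp.nat_pow_pow grp.nat_pow_mult A_c mult_2)
  finally have UK: "(A * A) ^\<^sub>m K = A [^]\<^bsub>GG\<^esub> K * A [^]\<^bsub>GG\<^esub> K" by (simp add: mulGG)
  have "cI N ((A * A) ^\<^sub>m K)" unfolding UK by (rule cI_mul[OF AK AK aK aK])
  hence "cz m N (((A * A) ^\<^sub>m K) $$ (i,i+s) - (if i = i + s then 1 else 0))"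
    using i by (intro cI_entry) auto
  moreover have "((A * A) ^\<^sub>m K) $$ (i,i+s) = of_nat K * (A * A) $$ (i,i+s)"
    using sunit_pow[OF s good_c[OF U_GS] sU, of K i] i by simp
  moreover have "i \<noteq> i + s" using s by simp
  ultimately show ?thesis unfolding K_def c_def by simp
qed

theorem CSP: "has_CSP m n GS"
  unfolding has_CSP_def
proof (intro allI impI)
  fix H assume H: "subgroup H GG \<and> finite (rcosets\<^bsub>GG\<^esub> H)"
  obtain D :: nat where D0: "D > 0" and Dp: "\<forall>x\<in>carrier GG. x [^]\<^bsub>GG\<^esub> D \<in> H"
    using grp_fin_index_pow[OF group_GG conjunct1[OF H] conjunct2[OF H]] by blast
  have Dp': "\<forall>x\<in>GS. x [^]\<^bsub>GG\<^esub> D \<in> H" using Dp by (simp add: GG_carrier)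
  obtain s i where s: "s \<ge> 1" and i: "i + s < n" and sU: "sunit n s (A * A)"
    and u0: "(A * A) $$ (i,i+s) \<noteq> 0" using level by blast
  define u where "u = (A * A) $$ (i,i+s)"
  have "u \<in> zinv m" using good_e[OF U_GS] i unfolding entries_in_def u_def by auto
  then obtain a t where ua: "u = of_int a / of_nat m ^ t" by (rule zinvE)
  have a0: "a \<noteq> 0" using u0 ua unfolding u_def by auto
  have lam: "T $$ (i,i) * Ti $$ (i+s,i+s) = of_nat m" by (rule key_m[OF s i sU u0])
  have "D * (m - 1) * nat \<bar>a\<bar> > 0" using D0 m2 a0 by auto
  then obtain N2 g' R0 where dec: "D * (m - 1) * nat \<bar>a\<bar> = N2 * g'" and cop2: "coprime N2 m"
    and g': "g' dvd m ^ R0" using coprime_decomp by blast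
  have N2: "N2 > 0"
  proof (rule ccontr)
    assume "\<not> N2 > 0"
    hence "N2 = 0" by simp
    thus False using dec \<open>D * (m - 1) * nat \<bar>a\<bar> > 0\<close> by simp
  qed
  have m1: "m > 1" using m2 by simp
  define N1 where "N1 = m ^ (2 * D) - 1"
  have mD: "m ^ (2 * D) \<ge> 4"
  proof -
    have "m ^ 2 \<le> m ^ (2 * D)" using m2 D0 by (intro power_increasing) auto
    moreover have "4 \<le> m ^ 2" using mult_le_mono[OF m2 m2] by (simp add: power2_eq_square)
    ultimately show ?thesis by simp
  qed
  have N1: "N1 > 0" unfolding N1_def using mD by simp
  have cop1: "coprime N1 m" unfolding N1_def by (rule coprime_pow_minus_one[OF m1]) (use D0 in simp)
  have NN: "N1 * N2 > 0" using N1 N2 by simp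
  show "\<exists>N>0. coprime N m \<and> cong_subgroup m n N GS \<subseteq> H"
  proof (intro exI[of _ "N1 * N2"] conjI)
    show "N1 * N2 > 0" using N1 N2 by simp
    show "coprime (N1 * N2) m" using cop1 cop2 by simp
    show "cong_subgroup m n (N1 * N2) GS \<subseteq> H"
    proof
      fix g assume "g \<in> cong_subgroup m n (N1 * N2) GS"
      hence gG: "g \<in> GS" and cg0: "\<forall>i<n. \<forall>j<n. (g $$ (i,j) - (1\<^sub>m n) $$ (i,j)) / of_nat (N1 * N2) \<in> zinv m"
        unfolding cong_subgroup_def by simp_all
      have cg: "cI (N1 * N2) g" unfolding eqv_def cz_def using cg0 by simp
      obtain k j b where gF: "g = F k j b" using normal_form[OF gG] by blast
      define e where "e = b - int k"
      have tk: "tp (int k) \<in> GS" by (rule tp_GS)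
      have "tp (int k) \<otimes>\<^bsub>GG\<^esub> g \<otimes>\<^bsub>GG\<^esub> tp (- int k) = ap j \<otimes>\<^bsub>GG\<^esub> tp e"
        unfolding gF e_def by (rule F_conj)
      moreover have "tp (- int k) = inv\<^bsub>GG\<^esub> (tp (int k))" by (rule grp.int_pow_neg[OF T_c])
      ultimately have "tp (int k) * g * inv\<^bsub>GG\<^esub> (tp (int k)) = ap j \<otimes>\<^bsub>GG\<^esub> tp e"
        by (simp add: mulGG)
      hence ch: "cI (N1 * N2) (ap j \<otimes>\<^bsub>GG\<^esub> tp e)" using cI_conj[OF gG tk cg] by simp
      have "cz m (N1 * N2) (of_nat m powi (2 * e) - 1)" by (rule exp_part[OF i lam ch])
      hence "cz m N1 (of_nat m powi (2 * e) - 1)" by (rule cz_dvd[OF NN _ dvd_triv_left])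
      hence "int N1 dvd int m ^ (2 * nat \<bar>e\<bar>) - 1" by (rule cz_pow_dvd[OF m1 N1 cop1])
      hence "int N1 dvd int (m ^ (2 * nat \<bar>e\<bar>) - 1)" using m2 by (simp add: of_nat_diff)
      hence "N1 dvd m ^ (2 * nat \<bar>e\<bar>) - 1" by (simp only: int_dvd_int_iff)
      hence "(m ^ 2) ^ D - 1 dvd (m ^ 2) ^ nat \<bar>e\<bar> - 1" unfolding N1_def by (simp add: power_mult)
      moreover have "m ^ 2 \<ge> 2" using mult_le_mono[OF m2 m2] by (simp add: power2_eq_square)
      ultimately have "D dvd nat \<bar>e\<bar>" using pow_minus_one_dvd_imp[of "m ^ 2" D "nat \<bar>e\<bar>"] D0 by blast
      hence "int D dvd int (nat \<bar>e\<bar>)" by (simp only: int_dvd_int_iff)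
      hence "int D dvd \<bar>e\<bar>" by simp
      hence De: "int D dvd e" by (simp only: dvd_abs_iff)
      have "cz m (N1 * N2) (of_nat (nat \<bar>j - j * int m\<bar>) * u)" unfolding u_def by (rule jcz[OF s i sU ch])
      hence "cz m N2 (of_nat (nat \<bar>j - j * int m\<bar>) * (of_int a / of_nat m ^ t))"
        unfolding ua by (rule cz_dvd[OF NN _ dvd_triv_right])
      then obtain R where Dj: "int D dvd j * int m ^ R"
        using jpart[OF m1 N2 cop2 dec g' a0 _ , of "nat \<bar>j - j * int m\<bar>" t j] by (simp, blast)
      have "g = (tp (- int k) \<otimes>\<^bsub>GG\<^esub> (ap j \<otimes>\<^bsub>GG\<^esub> tp (int k))) \<otimes>\<^bsub>GG\<^esub> tp e"
        unfolding gF e_def by (rule F_split)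
      moreover have h1: "tp (- int k) \<otimes>\<^bsub>GG\<^esub> (ap j \<otimes>\<^bsub>GG\<^esub> tp (int k)) \<in> H"
        by (rule H_A[OF conjunct1[OF H] Dp' Dj])
      moreover have h2: "tp e \<in> H" by (rule H_T[OF conjunct1[OF H] Dp' De])
      ultimately show "g \<in> H" using subgroup.m_closed[OF conjunct1[OF H] h1 h2] by simp
    qed
  qed
qed

end

theorem theorem1p5:
  fixes m n :: nat and A Ai T Ti :: "rat mat"
  assumes "m \<ge> 2" and "n \<ge> 1"
    and "A \<in> Tn_zinv m n" and "T \<in> Tn_zinv m n"
    and "Ai \<in> carrier_mat n n" and "A * Ai = 1\<^sub>m n" and "Ai * A = 1\<^sub>m n"
    and "Ti \<in> carrier_mat n n" and "T * Ti = 1\<^sub>m n" and "Ti * T = 1\<^sub>m n"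
    and hom: "T * A * Ti = A ^\<^sub>m m"
    and inj: "\<forall>w. word_eval n A Ai T Ti w = 1\<^sub>m n \<longrightarrow> bs_eq m w []"
  shows "has_CSP m n (range (word_eval n A Ai T Ti))"
proof -
  have "bsrep m n A Ai T Ti" unfolding bsrep_def using assms by blast
  thus ?thesis by (rule bsrep.CSP)
qed

end
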